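(* Let $M=\mathbb{R}/\mathbb{Z}$ be the circle with Lebesgue (length) measure $m$, and let $f_0:M\to M$ be a $C^2$ local diffeomorphism having a unique saddle-node fixed point, denoted $0$, i.e. $f_0(0)=0$, $f_0'(0)=1$ and $f_0''(0)>0$. Let $W_0$ be the connected component containing $0$ of the basin $B(\{0\})=\{x\in M: f_0^k(x)\to 0 \text{ as } k\to\infty\}$. Assume that $|f_0'(x)|>1$ for all $x\in M\setminus W_0$. Then the Dirac mass $\delta_0$ at $0$ is the unique physical measure of $f_0$.
   Context: An $f_0$-invariant Borel probability measure $\mu$ on $M$ is called physical if its ergodic basin $B(\mu)=\{x\in M: \frac1n\sum_{j=0}^{n-1}\varphi(f_0^j(x))\to\int\varphi\,d\mu \text{ for all continuous }\varphi:M\to\mathbb{R}\}$ has positive Lebesgue measure. *)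

theory Defs
  imports "HOL-Probability.Probability"
begin

text \<open>The circle M = R/Z is represented by the fundamental domain {0..<1}; a map
  f0 : M -> M is represented by a lift F : real -> real with F(x+1) = F x + d, d integer,
  and f0 x = frac (F x).\<close>

definition circ_map :: "(real \<Rightarrow> real) \<Rightarrow> real \<Rightarrow> real" where
  "circ_map F = (\<lambda>x. frac (F x))"

definition cdist0 :: "real \<Rightarrow> real" where
  "cdist0 x = min (frac x) (1 - frac x)"

definition M_borel :: "real measure" where
  "M_borel = restrict_space borel {0..<1}"

definition basin0 :: "(real \<Rightarrow> real) \<Rightarrow> real set" where
  "basin0 F = {x \<in> {0..<1}. (\<lambda>k. cdist0 ((circ_map F ^^ k) x)) \<longlonglongrightarrow> 0}"

text \<open>Connected component of B({0}) (in the circle) containing 0: projection of the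
  connected component of 0 in the lifted (1-periodic) set.\<close>
definition W0 :: "(real \<Rightarrow> real) \<Rightarrow> real set" where
  "W0 F = frac ` connected_component_set {x. frac x \<in> basin0 F} 0"

text \<open>Ergodic basin of a measure; continuous functions on the circle are the continuous
  1-periodic functions on R.\<close>
definition ergodic_basin :: "(real \<Rightarrow> real) \<Rightarrow> real measure \<Rightarrow> real set" where
  "ergodic_basin F \<mu> = {x \<in> {0..<1}. \<forall>\<phi> :: real \<Rightarrow> real.
      continuous_on UNIV \<phi> \<and> (\<forall>y. \<phi> (y + 1) = \<phi> y) \<longrightarrow>
      (\<lambda>n. (\<Sum>j<n. \<phi> ((circ_map F ^^ j) x)) / real n) \<longlonglongrightarrow> integral\<^sup>L \<mu> \<phi>}"

definition is_physical :: "(real \<Rightarrow> real) \<Rightarrow> real measure \<Rightarrow> bool" where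
  "is_physical F \<mu> \<longleftrightarrow> prob_space \<mu> \<and> sets \<mu> = sets M_borel \<and>
     circ_map F \<in> \<mu> \<rightarrow>\<^sub>M \<mu> \<and>
     (\<forall>A\<in>sets \<mu>. emeasure \<mu> (circ_map F -` A \<inter> space \<mu>) = emeasure \<mu> A) \<and>
     emeasure lebesgue (ergodic_basin F \<mu>) > 0"

end

theory Submission
  imports Defs
begin

lemma deriv_lip:
  fixes h h' :: "real \<Rightarrow> real"
  assumes "\<And>t. u \<le> t \<Longrightarrow> t \<le> v \<Longrightarrow> (h has_real_derivative h' t) (at t)"
    and "\<And>t. u \<le> t \<Longrightarrow> t \<le> v \<Longrightarrow> \<bar>h' t\<bar> \<le> B"
    and "u \<le> s" "s \<le> v" "u \<le> t" "t \<le> v"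
  shows "\<bar>h s - h t\<bar> \<le> B * \<bar>s - t\<bar>"
proof -
  have *: "\<bar>h y - h x\<bar> \<le> B * \<bar>y - x\<bar>" if "u \<le> x" "x < y" "y \<le> v" for x y
  proof -
    have "\<exists>z>x. z < y \<and> h y - h x = (y - x) * h' z"
      by (rule MVT2) (use that assms(1) in auto)
    then obtain z where z: "x < z" "z < y" "h y - h x = (y - x) * h' z" by blast
    have "\<bar>h y - h x\<bar> = \<bar>y - x\<bar> * \<bar>h' z\<bar>" using z by (simp add: abs_mult)
    also have "\<dots> \<le> \<bar>y - x\<bar> * B" using assms(2)[of z] z that
      by (intro mult_left_mono) auto
    finally show ?thesis by (simp add: mult.commute)
  qed
  show ?thesis
  proof (cases s t rule: linorder_cases)
    case less then show ?thesis using *[of s t] assms by (metis abs_minus_commute)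
  next
    case greater then show ?thesis using *[of t s] assms by simp
  qed simp
qed

locale sn_core =
  fixes G G' G'' :: "real \<Rightarrow> real" and d :: int and A :: real
  assumes G_deriv: "\<And>x. (G has_real_derivative G' x) (at x)"
  and G'_deriv: "\<And>x. (G' has_real_derivative G'' x) (at x)"
  and G''_cont: "continuous_on UNIV G''"
  and G'_pos: "\<And>x. G' x > 0"
  and G_per: "\<And>x. G (x+1) = G x + of_int d"
  and G0: "G 0 = 0"
  and A: "0 < A" "A < 1"
  and GA: "G A = A + of_int d - 1"
  and expand: "\<And>x. 0 < x \<Longrightarrow> x \<le> A \<Longrightarrow> G' x > 1"
  and d2: "d \<ge> 2"
begin

lemma G_cont: "isCont G x" using G_deriv DERIV_isCont by blast
lemma G'_cont: "isCont G' x" using G'_deriv DERIV_isCont by blast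
lemma G_cont_on: "continuous_on S G" by (simp add: G_cont continuous_at_imp_continuous_on)
lemma G'_cont_on: "continuous_on S G'" by (simp add: G'_cont continuous_at_imp_continuous_on)

lemma G_less: "x < y \<Longrightarrow> G x < G y"
  using DERIV_pos_imp_increasing[of x y G] G_deriv G'_pos by blast

lemma G_le_iff: "G x \<le> G y \<longleftrightarrow> x \<le> y"
  using G_less[of x y] G_less[of y x] by (cases x y rule: linorder_cases) auto
lemma G_less_iff: "G x < G y \<longleftrightarrow> x < y"
  using G_less[of x y] G_less[of y x] by (cases x y rule: linorder_cases) auto
lemma G_inj: "G x = G y \<longleftrightarrow> x = y"
  using G_less[of x y] G_less[of y x] by (cases x y rule: linorder_cases) auto

lemma G_int: "G (x + of_int m) = G x + of_int d * of_int m"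
proof (induction m rule: int_induct[where k=0])
  case base then show ?case by simp
next
  case (step1 i)
  have "G (x + of_int (i+1)) = G ((x + of_int i) + 1)" by (simp add: add.assoc)
  also have "\<dots> = G (x + of_int i) + of_int d" by (rule G_per)
  also have "\<dots> = G x + of_int d * of_int (i+1)" using step1 by (simp add: algebra_simps)
  finally show ?case .
next
  case (step2 i)
  have "G (x + of_int i) = G ((x + of_int (i - 1)) + 1)" by (simp add: add.assoc)
  also have "\<dots> = G (x + of_int (i - 1)) + of_int d" by (rule G_per)
  finally show ?case using step2 by (simp add: algebra_simps)
qed

lemma G_surj: "\<exists>x. G x = y"
proof -
  define m where "m = \<lfloor>y / of_int d\<rfloor>"
  have dpos: "(of_int d::real) > 0" using d2 by simp
  have "of_int m \<le> y / of_int d" "y / of_int d < of_int m + 1" unfolding m_def by linarith+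
  then have 1: "of_int d * of_int m \<le> y" "y < of_int d * (of_int m + 1)"
    using dpos by (simp_all add: field_simps)
  have a: "G (of_int m) = of_int d * of_int m" using G_int[of 0 m] G0 by simp
  have b: "G (of_int m + 1) = of_int d * (of_int m + 1)" using G_per[of "of_int m"] a by (simp add: algebra_simps)
  have "\<exists>x\<ge>of_int m. x \<le> of_int m + 1 \<and> G x = y"
    by (rule IVT) (use a b 1 in \<open>simp_all add: G_cont\<close>)
  then show ?thesis by blast
qed

definition Ginv :: "real \<Rightarrow> real" where "Ginv y = (THE x. G x = y)"

lemma G_Ginv[simp]: "G (Ginv y) = y"
proof -
  obtain x where x: "G x = y" using G_surj by blast
  have "\<exists>!x. G x = y"
  proof (rule ex1I)
    show "G x = y" by (rule x)
    fix z assume "G z = y" then show "z = x" using x G_inj[of z x] by simp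
  qed
  then show ?thesis unfolding Ginv_def by (rule theI')
qed
lemma Ginv_G[simp]: "Ginv (G x) = x"
  using G_Ginv G_inj by blast
lemma Ginv_less_iff: "Ginv x < Ginv y \<longleftrightarrow> x < y"
  using G_less_iff[of "Ginv x" "Ginv y"] by simp
lemma Ginv_le_iff: "Ginv x \<le> Ginv y \<longleftrightarrow> x \<le> y"
  using G_le_iff[of "Ginv x" "Ginv y"] by simp
lemma Ginv_eq_iff: "Ginv x = Ginv y \<longleftrightarrow> x = y"
  using G_inj[of "Ginv x" "Ginv y"] by simp
lemma Ginv_eq: "G x = y \<Longrightarrow> Ginv y = x" using Ginv_G by blast

lemma Ginv_cont: "isCont Ginv y"
proof -
  have "isCont Ginv (G (Ginv y))"
    by (rule isCont_inverse_function[where d=1]) (auto simp: G_cont)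
  then show ?thesis by simp
qed
lemma Ginv_cont_on: "continuous_on S Ginv" by (simp add: Ginv_cont continuous_at_imp_continuous_on)

lemma Ginv_deriv: "(Ginv has_real_derivative (1 / G' (Ginv y))) (at y)"
proof -
  have "(Ginv has_real_derivative inverse (G' (Ginv y))) (at y)"
  proof (rule DERIV_inverse_function[where a="y-1" and b="y+1"])
    show "(G has_real_derivative G' (Ginv y)) (at (Ginv y))" by (rule G_deriv)
    show "G' (Ginv y) \<noteq> 0" using G'_pos[of "Ginv y"] by simp
    show "isCont Ginv y" by (rule Ginv_cont)
  qed auto
  then show ?thesis by (simp add: inverse_eq_divide)
qed

lemma G0_iff: "Ginv 0 = 0" using Ginv_eq[OF G0] .
lemma GinvA: "Ginv (A + of_int d - 1) = A" using Ginv_eq[OF GA] .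

lemma G_gt_id: "0 < x \<Longrightarrow> x \<le> A \<Longrightarrow> G x > x"
proof -
  assume x: "0 < x" "x \<le> A"
  obtain z where z: "0 < z" "z < x" "G x - G 0 = (x - 0) * G' z"
    using MVT2[of 0 x G G'] G_deriv x by blast
  have "G' z > 1" using expand[of z] z x by simp
  then show ?thesis using z x G0 by (simp add: mult_less_cancel_left1)
qed

end

lemma mvt_any:
  fixes h h' :: "real \<Rightarrow> real"
  assumes "\<And>t. (h has_real_derivative h' t) (at t)"
  shows "\<exists>\<xi>. min y z \<le> \<xi> \<and> \<xi> \<le> max y z \<and> h y - h z = h' \<xi> * (y - z)"
proof (cases y z rule: linorder_cases)
  case less
  have "\<exists>\<xi>>y. \<xi> < z \<and> h z - h y = (z - y) * h' \<xi>"
    by (rule MVT2) (use less assms in auto)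
  then obtain \<xi> where "y < \<xi>" "\<xi> < z" "h z - h y = (z - y) * h' \<xi>" by blast
  then show ?thesis using less by (intro exI[of _ \<xi>]) (auto simp: algebra_simps)
next
  case greater
  have "\<exists>\<xi>>z. \<xi> < y \<and> h y - h z = (y - z) * h' \<xi>"
    by (rule MVT2) (use greater assms in auto)
  then obtain \<xi> where "z < \<xi>" "\<xi> < y" "h y - h z = (y - z) * h' \<xi>" by blast
  then show ?thesis using greater by (intro exI[of _ \<xi>]) (auto simp: algebra_simps)
next
  case equal then show ?thesis by (intro exI[of _ y]) auto
qed

context sn_core begin

lemma G'_nz[simp]: "G' x \<noteq> 0" using G'_pos[of x] by simp

definition xs :: "nat \<Rightarrow> real" where "xs k = (Ginv ^^ k) A"

lemma xs_0[simp]: "xs 0 = A" by (simp add: xs_def)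
lemma xs_Suc: "xs (Suc k) = Ginv (xs k)" by (simp add: xs_def)

lemma Ginv_lt: assumes "0 < y" "y \<le> A" shows "0 < Ginv y" "Ginv y < y" "Ginv y \<le> A"
proof -
  show "0 < Ginv y" using assms G0_iff Ginv_less_iff[of 0 y] by simp
  have "y \<le> G A" using assms GA d2 by simp
  then show "Ginv y \<le> A" using Ginv_le_iff[of y "G A"] by simp
  then have "G (Ginv y) > Ginv y" using G_gt_id \<open>0 < Ginv y\<close> by blast
  then show "Ginv y < y" by simp
qed

lemma xs_props: "0 < xs k \<and> xs k \<le> A"
proof (induction k)
  case 0 then show ?case using A by simp
next
  case (Suc k) then show ?case using Ginv_lt[of "xs k"] by (simp add: xs_Suc)
qed

lemma xs_pos: "0 < xs k" and xs_le: "xs k \<le> A" using xs_props by auto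

lemma xs_dec: "xs (Suc k) < xs k"
  using Ginv_lt[of "xs k"] xs_pos xs_le by (simp add: xs_Suc)

lemma G_xs: "G (xs (Suc k)) = xs k" by (simp add: xs_Suc)

lemma xs_antimono: "m \<le> n \<Longrightarrow> xs n \<le> xs m"
proof (induction n)
  case 0 then show ?case by simp
next
  case (Suc n)
  then show ?case
    using xs_dec[of n] by (cases "m = Suc n") (auto simp: le_Suc_eq)
qed

lemma xs_strict: "m < n \<Longrightarrow> xs n < xs m"
  using xs_antimono[of "Suc m" n] xs_dec[of m] by simp

lemma xs_lim: "xs \<longlonglongrightarrow> 0"
proof -
  have am: "antimono_on UNIV xs"
    by (rule monotone_onI) (use xs_antimono in auto)
  obtain L where L: "xs \<longlonglongrightarrow> L" "\<forall>i. L \<le> xs i"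
    using decseq_convergent[OF am, of 0] xs_pos less_imp_le by blast
  have L0: "L \<ge> 0" using L(1) xs_pos by (meson LIMSEQ_le_const less_imp_le)
  have "(\<lambda>k. Ginv (xs k)) \<longlonglongrightarrow> Ginv L"
    using Ginv_cont L(1) by (rule isCont_tendsto_compose)
  moreover have "(\<lambda>k. Ginv (xs k)) \<longlonglongrightarrow> L"
    using L(1) unfolding xs_Suc[symmetric] by (rule LIMSEQ_Suc)
  ultimately have "Ginv L = L" using LIMSEQ_unique by blast
  moreover have "L \<le> A" using L(2) by (metis xs_0)
  ultimately have "L = 0" using Ginv_lt[of L] L0 by force
  then show ?thesis using L(1) by simp
qed

lemma Ginv1: "0 < Ginv 1" "Ginv 1 < A" "xs 1 < Ginv 1"
proof -
  show "0 < Ginv 1" using G0_iff Ginv_less_iff[of 0 1] by simp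
  have "1 < G A" using GA d2 A by simp
  then show "Ginv 1 < A" using Ginv_less_iff[of 1 "G A"] by simp
  show "xs 1 < Ginv 1" using A Ginv_less_iff[of A 1] by (simp add: xs_Suc)
qed

lemma lam_ex: "\<exists>l>1. \<forall>t\<in>{Ginv 1..A}. l \<le> G' t"
proof -
  obtain t0 where t0: "t0 \<in> {Ginv 1..A}" "\<forall>t\<in>{Ginv 1..A}. G' t0 \<le> G' t"
    using continuous_attains_inf[of "{Ginv 1..A}" G'] Ginv1 G'_cont_on by force
  have "G' t0 > 1" using expand[of t0] t0(1) Ginv1 by auto
  then show ?thesis using t0 by blast
qed

definition lam :: real where "lam = (SOME l. l > 1 \<and> (\<forall>t\<in>{Ginv 1..A}. l \<le> G' t))"

lemma lam: "lam > 1" "\<And>t. Ginv 1 \<le> t \<Longrightarrow> t \<le> A \<Longrightarrow> lam \<le> G' t"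
proof -
  have "lam > 1 \<and> (\<forall>t\<in>{Ginv 1..A}. lam \<le> G' t)"
    unfolding lam_def by (rule someI_ex) (use lam_ex in blast)
  then show "lam > 1" "\<And>t. Ginv 1 \<le> t \<Longrightarrow> t \<le> A \<Longrightarrow> lam \<le> G' t" by auto
qed

lemma lnG'_deriv: "((\<lambda>t. ln (G' t)) has_real_derivative (1 / G' t * G'' t)) (at t)"
  by (rule DERIV_chain2[OF DERIV_ln_divide G'_deriv]) (rule G'_pos)

lemma Lc_ex: "\<exists>L\<ge>0. \<forall>s t. s \<in> {0..1} \<longrightarrow> t \<in> {0..1} \<longrightarrow> \<bar>ln (G' s) - ln (G' t)\<bar> \<le> L * \<bar>s - t\<bar>"
proof -
  have c: "continuous_on {0..1} (\<lambda>t. \<bar>1 / G' t * G'' t\<bar>)"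
    by (intro continuous_intros G'_cont_on continuous_on_subset[OF G''_cont]) auto
  obtain t0 where t0: "t0 \<in> {0..1}" "\<forall>t\<in>{0..1}. \<bar>1 / G' t * G'' t\<bar> \<le> \<bar>1 / G' t0 * G'' t0\<bar>"
    using continuous_attains_sup[OF _ _ c] by force
  show ?thesis
  proof (intro exI[of _ "\<bar>1 / G' t0 * G'' t0\<bar>"] conjI allI impI)
    fix s t :: real assume "s \<in> {0..1}" "t \<in> {0..1}"
    then show "\<bar>ln (G' s) - ln (G' t)\<bar> \<le> \<bar>1 / G' t0 * G'' t0\<bar> * \<bar>s - t\<bar>"
      by (intro deriv_lip[of 0 1 _ "\<lambda>t. 1 / G' t * G'' t"] lnG'_deriv) (use t0 in auto)
  qed simp
qed

definition Lc :: real where "Lc = (SOME L. L \<ge> 0 \<and> (\<forall>s t. s \<in> {0..1} \<longrightarrow> t \<in> {0..1} \<longrightarrow> \<bar>ln (G' s) - ln (G' t)\<bar> \<le> L * \<bar>s - t\<bar>))"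

lemma Lc: "Lc \<ge> 0" "\<And>s t. s \<in> {0..1} \<Longrightarrow> t \<in> {0..1} \<Longrightarrow> \<bar>ln (G' s) - ln (G' t)\<bar> \<le> Lc * \<bar>s - t\<bar>"
proof -
  have "Lc \<ge> 0 \<and> (\<forall>s t. s \<in> {0..1} \<longrightarrow> t \<in> {0..1} \<longrightarrow> \<bar>ln (G' s) - ln (G' t)\<bar> \<le> Lc * \<bar>s - t\<bar>)"
    unfolding Lc_def by (rule someI_ex) (use Lc_ex in blast)
  then show "Lc \<ge> 0" "\<And>s t. s \<in> {0..1} \<Longrightarrow> t \<in> {0..1} \<Longrightarrow> \<bar>ln (G' s) - ln (G' t)\<bar> \<le> Lc * \<bar>s - t\<bar>" by auto
qed

end

context sn_core begin

definition g :: "nat \<Rightarrow> real \<Rightarrow> real" where "g k = Ginv ^^ k"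
definition gs :: "nat \<Rightarrow> real \<Rightarrow> real" where "gs k y = (\<Sum>m\<in>{1..k}. ln (G' (g m y)))"
definition gd :: "nat \<Rightarrow> real \<Rightarrow> real" where "gd k y = exp (- gs k y)"

lemma g_0[simp]: "g 0 y = y" by (simp add: g_def)
lemma g_Suc: "g (Suc k) y = Ginv (g k y)" by (simp add: g_def)
lemma g_Suc_fun: "g (Suc k) = (\<lambda>y. Ginv (g k y))" by (simp add: g_def fun_eq_iff)
lemma g_Suc': "g (Suc k) y = g k (Ginv y)" by (simp add: g_def funpow_Suc_right del: funpow.simps)
lemma G_g_Suc: "G (g (Suc k) y) = g k y" by (simp add: g_Suc)

lemma g_xs: "g m (xs j) = xs (m + j)"
  by (induction m) (simp_all add: g_Suc xs_Suc)

lemma g_le_iff: "g k x \<le> g k y \<longleftrightarrow> x \<le> y"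
  by (induction k) (simp_all add: g_Suc Ginv_le_iff)
lemma g_less_iff: "g k x < g k y \<longleftrightarrow> x < y"
  by (induction k) (simp_all add: g_Suc Ginv_less_iff)

lemma g_range: assumes "xs 1 \<le> y" "y \<le> A" shows "xs (Suc m) \<le> g m y" "g m y \<le> xs m"
proof -
  show "xs (Suc m) \<le> g m y" using g_le_iff[of m "xs 1" y] assms g_xs[of m 1] by simp
  show "g m y \<le> xs m" using g_le_iff[of m y A] assms g_xs[of m 0] by simp
qed

lemma g_range2: assumes "xs 1 \<le> y" "y \<le> A" shows "0 < g m y" "g m y \<le> A"
  using g_range[OF assms, of m] xs_pos[of "Suc m"] xs_le[of m] by auto

lemma gd_0[simp]: "gd 0 y = 1" by (simp add: gd_def gs_def)

lemma gs_Suc: "gs (Suc k) y = gs k y + ln (G' (g (Suc k) y))"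
  by (simp add: gs_def)

lemma gd_Suc: "gd (Suc k) y = gd k y / G' (g (Suc k) y)"
  using G'_pos[of "g (Suc k) y"] by (simp add: gd_def gs_Suc exp_diff exp_minus field_simps)

lemma gd_pos: "gd k y > 0" by (simp add: gd_def)

lemma g_deriv: "(g k has_real_derivative gd k y) (at y)"
proof (induction k arbitrary: y)
  case 0
  have "((\<lambda>y. y) has_real_derivative 1) (at y)" by (rule DERIV_ident)
  then show ?case by (simp add: g_def id_def)
next
  case (Suc k)
  have "((\<lambda>y. Ginv (g k y)) has_real_derivative (1 / G' (Ginv (g k y)) * gd k y)) (at y)"
    by (rule DERIV_chain2[OF Ginv_deriv Suc.IH])
  then show ?case by (simp add: g_Suc_fun gd_Suc g_Suc)
qed

lemma telesc: "(\<Sum>m\<in>{1..k}. (xs m - xs (Suc m))) = xs 1 - xs (Suc k)"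
  by (induction k) (simp_all add: sum.cl_ivl_Suc)

lemma gs_nonneg: assumes "xs 1 \<le> y" "y \<le> A" shows "gs k y \<ge> 0"
  unfolding gs_def
proof (rule sum_nonneg)
  fix m assume "m \<in> {1..k}"
  have "G' (g m y) > 1" using expand g_range2[OF assms, of m] by blast
  then show "ln (G' (g m y)) \<ge> 0" by simp
qed

lemma gd_le1: assumes "xs 1 \<le> y" "y \<le> A" shows "gd k y \<le> 1"
  using gs_nonneg[OF assms, of k] by (simp add: gd_def)

lemma g_01: assumes "xs 1 \<le> y" "y \<le> A" shows "g m y \<in> {0..1}"
  using g_range2[OF assms, of m] A by auto

lemma gs_lip_sum: assumes "xs 1 \<le> y" "y \<le> A" "xs 1 \<le> z" "z \<le> A"
  shows "\<bar>gs k y - gs k z\<bar> \<le> Lc * (\<Sum>m\<in>{1..k}. \<bar>g m y - g m z\<bar>)"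
proof -
  have "\<bar>gs k y - gs k z\<bar> = \<bar>\<Sum>m\<in>{1..k}. (ln (G' (g m y)) - ln (G' (g m z)))\<bar>"
    by (simp add: gs_def sum_subtractf)
  also have "\<dots> \<le> (\<Sum>m\<in>{1..k}. \<bar>ln (G' (g m y)) - ln (G' (g m z))\<bar>)" by (rule sum_abs)
  also have "\<dots> \<le> (\<Sum>m\<in>{1..k}. Lc * \<bar>g m y - g m z\<bar>)"
    by (intro sum_mono Lc(2) g_01) (use assms in auto)
  finally show ?thesis by (simp add: sum_distrib_left)
qed

lemma gs_dist: assumes "xs 1 \<le> y" "y \<le> A" "xs 1 \<le> z" "z \<le> A"
  shows "\<bar>gs k y - gs k z\<bar> \<le> Lc * A"
proof -
  have "(\<Sum>m\<in>{1..k}. \<bar>g m y - g m z\<bar>) \<le> (\<Sum>m\<in>{1..k}. (xs m - xs (Suc m)))"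
  proof (rule sum_mono)
    fix m assume "m \<in> {1..k}"
    show "\<bar>g m y - g m z\<bar> \<le> xs m - xs (Suc m)"
      using g_range[OF assms(1,2), of m] g_range[OF assms(3,4), of m] by linarith
  qed
  also have "\<dots> \<le> A" unfolding telesc using xs_le[of 1] xs_pos[of "Suc k"] by linarith
  finally have "(\<Sum>m\<in>{1..k}. \<bar>g m y - g m z\<bar>) \<le> A" .
  then have "Lc * (\<Sum>m\<in>{1..k}. \<bar>g m y - g m z\<bar>) \<le> Lc * A" using Lc(1) by (rule mult_left_mono)
  then show ?thesis using gs_lip_sum[OF assms, of k] by linarith
qed

definition C1 :: real where "C1 = exp (Lc * A) * A / (A - xs 1)"

lemma xs1_lt_A: "xs 1 < A" using xs_dec[of 0] by simp

lemma C1_pos: "C1 > 0" using A xs1_lt_A by (simp add: C1_def)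

lemma H: assumes "xs 1 \<le> y" "y \<le> A" "xs 1 \<le> z" "z \<le> A"
  shows "(\<Sum>m\<in>{1..k}. \<bar>g m y - g m z\<bar>) \<le> C1 * \<bar>y - z\<bar>"
proof -
  have AX: "A - xs 1 > 0" using xs1_lt_A by simp
  have each: "\<bar>g m y - g m z\<bar> \<le> exp (Lc * A) / (A - xs 1) * \<bar>y - z\<bar> * (xs m - xs (Suc m))" for m
  proof -
    obtain \<xi> where \<xi>: "min y z \<le> \<xi>" "\<xi> \<le> max y z" "g m y - g m z = gd m \<xi> * (y - z)"
      using mvt_any[where h="g m" and h'="gd m" and y=y and z=z] g_deriv by blast
    obtain \<zeta> where \<zeta>: "min A (xs 1) \<le> \<zeta>" "\<zeta> \<le> max A (xs 1)" "g m A - g m (xs 1) = gd m \<zeta> * (A - xs 1)"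
      using mvt_any[where h="g m" and h'="gd m" and y=A and z="xs 1"] g_deriv by blast
    have \<xi>r: "xs 1 \<le> \<xi>" "\<xi> \<le> A" using \<xi> assms by auto
    have \<zeta>r: "xs 1 \<le> \<zeta>" "\<zeta> \<le> A" using \<zeta> xs1_lt_A by auto
    have e: "xs m - xs (Suc m) = gd m \<zeta> * (A - xs 1)"
      using \<zeta>(3) g_xs[of m 0] g_xs[of m 1] by simp
    have "gs m \<zeta> - gs m \<xi> \<le> Lc * A" using gs_dist[OF \<zeta>r \<xi>r, of m] by linarith
    then have "gd m \<xi> \<le> exp (Lc * A) * gd m \<zeta>"
      by (simp add: gd_def flip: exp_add)
    moreover have "exp (Lc * A) / (A - xs 1) * (xs m - xs (Suc m)) = exp (Lc * A) * gd m \<zeta>"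
      using AX by (simp add: e)
    ultimately have "gd m \<xi> \<le> exp (Lc * A) / (A - xs 1) * (xs m - xs (Suc m))"
      by linarith
    then have "gd m \<xi> * \<bar>y - z\<bar> \<le> exp (Lc * A) / (A - xs 1) * (xs m - xs (Suc m)) * \<bar>y - z\<bar>"
      by (rule mult_right_mono) simp
    moreover have "\<bar>g m y - g m z\<bar> = gd m \<xi> * \<bar>y - z\<bar>"
      using \<xi>(3) gd_pos[of m \<xi>] by (simp add: abs_mult)
    ultimately show ?thesis by (simp add: mult_ac)
  qed
  have "(\<Sum>m\<in>{1..k}. \<bar>g m y - g m z\<bar>) \<le> (\<Sum>m\<in>{1..k}. exp (Lc * A) / (A - xs 1) * \<bar>y - z\<bar> * (xs m - xs (Suc m)))"
    by (rule sum_mono) (rule each)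
  also have "\<dots> = exp (Lc * A) / (A - xs 1) * \<bar>y - z\<bar> * (xs 1 - xs (Suc k))"
    by (subst sum_distrib_left[symmetric]) (simp only: telesc)
  also have "\<dots> \<le> exp (Lc * A) / (A - xs 1) * \<bar>y - z\<bar> * A"
    using xs_le[of 1] xs_pos[of "Suc k"] AX
    by (intro mult_left_mono) (simp_all)
  also have "\<dots> = C1 * \<bar>y - z\<bar>" by (simp add: C1_def)
  finally show ?thesis .
qed

end

context sn_core begin

definition I :: "(nat \<times> nat) set" where "I = {1..<nat d} \<times> UNIV"
definition psi :: "nat \<times> nat \<Rightarrow> real \<Rightarrow> real" where "psi b y = Ginv (real (fst b) + g (snd b) y)"
definition psid :: "nat \<times> nat \<Rightarrow> real \<Rightarrow> real" where "psid b y = gd (snd b) y / G' (psi b y)"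

lemma psi_deriv: "(psi b has_real_derivative psid b y) (at y)"
proof -
  have "((\<lambda>y. real (fst b) + g (snd b) y) has_real_derivative (0 + gd (snd b) y)) (at y)"
    by (intro DERIV_add DERIV_const g_deriv)
  then have "((\<lambda>y. Ginv (real (fst b) + g (snd b) y)) has_real_derivative
      (1 / G' (Ginv (real (fst b) + g (snd b) y)) * (0 + gd (snd b) y))) (at y)"
    by (rule DERIV_chain2[OF Ginv_deriv])
  then show ?thesis by (simp add: psi_def[abs_def] psid_def)
qed

lemma psid_pos: "psid b y > 0" using gd_pos G'_pos by (simp add: psid_def)

lemma I_iff: "b \<in> I \<longleftrightarrow> 1 \<le> fst b \<and> fst b < nat d" by (cases b) (auto simp: I_def)

lemma psi_bounds: assumes b: "b \<in> I" and y: "xs 1 \<le> y" "y \<le> A"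
  shows "Ginv (real (fst b) + xs (Suc (snd b))) \<le> psi b y" "psi b y \<le> Ginv (real (fst b) + xs (snd b))"
    "Ginv 1 < psi b y" "psi b y \<le> A"
proof -
  obtain j k where bjk: "b = (j,k)" by (cases b)
  have j: "1 \<le> j" "j < nat d" using b by (simp_all add: I_iff bjk)
  have r: "xs (Suc k) \<le> g k y" "g k y \<le> xs k" using g_range[OF y] by auto
  show "Ginv (real (fst b) + xs (Suc (snd b))) \<le> psi b y" "psi b y \<le> Ginv (real (fst b) + xs (snd b))"
    using r by (simp_all add: psi_def bjk Ginv_le_iff)
  have "1 < real j + g k y" using j xs_pos[of "Suc k"] r by linarith
  then show "Ginv 1 < psi b y" by (simp add: psi_def bjk Ginv_less_iff)
  have "int j < d" using j(2) by (simp add: zless_nat_eq_int_zless)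
  then have "real_of_int (int j) \<le> real_of_int (d - 1)" by (simp only: of_int_le_iff)
  then have "real j \<le> of_int d - 1" by simp
  then have "real j + g k y \<le> A + of_int d - 1" using r xs_le[of k] by linarith
  then have "Ginv (real j + g k y) \<le> Ginv (A + of_int d - 1)" by (simp only: Ginv_le_iff)
  then show "psi b y \<le> A" using GinvA by (simp add: psi_def bjk)
qed

lemma psi_in: assumes "b \<in> I" "xs 1 \<le> y" "y \<le> A" shows "xs 1 \<le> psi b y" "psi b y \<le> A" "psi b y \<in> {0..1}"
  using psi_bounds[OF assms] Ginv1 A by auto

lemma psid_le: assumes b: "b \<in> I" and y: "xs 1 \<le> y" "y \<le> A" shows "psid b y \<le> 1 / lam"
proof -
  have l: "lam \<le> G' (psi b y)" using lam(2) psi_bounds[OF assms] by auto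
  have "gd (snd b) y / G' (psi b y) \<le> 1 / G' (psi b y)"
    by (rule divide_right_mono) (use gd_le1[OF y] G'_pos[of "psi b y"] in auto)
  also have "\<dots> \<le> 1 / lam"
    by (rule divide_left_mono) (use l lam(1) in auto)
  finally show ?thesis by (simp add: psid_def)
qed

lemma psi_contr: assumes b: "b \<in> I" and "xs 1 \<le> y" "y \<le> A" "xs 1 \<le> z" "z \<le> A"
  shows "\<bar>psi b y - psi b z\<bar> \<le> 1 / lam * \<bar>y - z\<bar>"
proof (rule deriv_lip[where u="xs 1" and v=A and h'="psid b"])
  fix t assume t: "xs 1 \<le> t" "t \<le> A"
  show "(psi b has_real_derivative psid b t) (at t)" by (rule psi_deriv)
  have "psid b t \<le> 1/lam" by (rule psid_le) (use b t in auto)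
  then show "\<bar>psid b t\<bar> \<le> 1/lam" using psid_pos[of b t] by simp
qed (use assms in auto)

definition Dc :: real where "Dc = Lc * (C1 + 1)"
definition Kc :: real where "Kc = Dc * lam / (lam - 1)"

lemma Dc_nonneg: "Dc \<ge> 0" using Lc(1) C1_pos by (simp add: Dc_def)
lemma Kc_nonneg: "Kc \<ge> 0" using Dc_nonneg lam(1) by (simp add: Kc_def)
lemma Kc_eq: "Kc / lam + Dc = Kc" using lam(1) by (simp add: Kc_def field_simps)

lemma ln_psid: "ln (psid b y) = - gs (snd b) y - ln (G' (psi b y))"
  using G'_pos[of "psi b y"] by (simp add: psid_def gd_def ln_div)

lemma psid_lip: assumes b: "b \<in> I" and y: "xs 1 \<le> y" "y \<le> A" and z: "xs 1 \<le> z" "z \<le> A"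
  shows "\<bar>ln (psid b y) - ln (psid b z)\<bar> \<le> Dc * \<bar>y - z\<bar>"
proof -
  have 1: "\<bar>gs (snd b) y - gs (snd b) z\<bar> \<le> Lc * (C1 * \<bar>y - z\<bar>)"
    using gs_lip_sum[OF y z, of "snd b"] H[OF y z, of "snd b"] Lc(1)
    by (meson mult_left_mono order_trans)
  have 2: "\<bar>ln (G' (psi b y)) - ln (G' (psi b z))\<bar> \<le> Lc * \<bar>psi b y - psi b z\<bar>"
    using Lc(2) psi_in[OF b y] psi_in[OF b z] by blast
  have "\<bar>psi b y - psi b z\<bar> \<le> 1 / lam * \<bar>y - z\<bar>" by (rule psi_contr[OF b y z])
  also have "\<dots> \<le> 1 * \<bar>y - z\<bar>" using lam(1) by (intro mult_right_mono) auto
  finally have "\<bar>psi b y - psi b z\<bar> \<le> \<bar>y - z\<bar>" by simp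
  from this Lc(1) have 3: "Lc * \<bar>psi b y - psi b z\<bar> \<le> Lc * \<bar>y - z\<bar>" by (rule mult_left_mono)
  have "\<bar>ln (psid b y) - ln (psid b z)\<bar> \<le> \<bar>gs (snd b) y - gs (snd b) z\<bar> + \<bar>ln (G' (psi b y)) - ln (G' (psi b z))\<bar>"
    unfolding ln_psid by linarith
  also have "\<dots> \<le> Lc * (C1 * \<bar>y - z\<bar>) + Lc * \<bar>y - z\<bar>" using 1 2 3 by linarith
  also have "\<dots> = Dc * \<bar>y - z\<bar>" by (simp add: Dc_def algebra_simps)
  finally show ?thesis .
qed

inductive_set Psi :: "((real \<Rightarrow> real) \<times> (real \<Rightarrow> real)) set" where
  Psi_id: "((\<lambda>y. y), (\<lambda>y. 1)) \<in> Psi"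
| Psi_step: "(\<psi>, \<psi>') \<in> Psi \<Longrightarrow> b \<in> I \<Longrightarrow> ((\<lambda>y. \<psi> (psi b y)), (\<lambda>y. \<psi>' (psi b y) * psid b y)) \<in> Psi"

lemma Psi_inv:
  assumes "(\<psi>, \<psi>') \<in> Psi"
  shows "(\<forall>y. (\<psi> has_real_derivative \<psi>' y) (at y)) \<and> (\<forall>y. \<psi>' y > 0) \<and>
    (\<forall>y z. y \<in> {xs 1..A} \<longrightarrow> z \<in> {xs 1..A} \<longrightarrow> \<bar>ln (\<psi>' y) - ln (\<psi>' z)\<bar> \<le> Kc * \<bar>y - z\<bar>)"
  using assms
proof (induction rule: Psi.induct)
  case Psi_id
  have "\<forall>y. ((\<lambda>y. y) has_real_derivative 1) (at y)" using DERIV_ident by blast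
  then show ?case using Kc_nonneg by simp
next
  case (Psi_step \<psi> \<psi>' b)
  have D: "((\<lambda>y. \<psi> (psi b y)) has_real_derivative (\<psi>' (psi b y) * psid b y)) (at y)" for y
    using Psi_step.IH psi_deriv by (blast intro: DERIV_chain2)
  have P: "\<psi>' (psi b y) * psid b y > 0" for y using Psi_step.IH psid_pos by simp
  have L: "\<bar>ln (\<psi>' (psi b y) * psid b y) - ln (\<psi>' (psi b z) * psid b z)\<bar> \<le> Kc * \<bar>y - z\<bar>"
    if y: "y \<in> {xs 1..A}" and z: "z \<in> {xs 1..A}" for y z
  proof -
    have pos: "\<psi>' (psi b y) > 0" "\<psi>' (psi b z) > 0" "psid b y > 0" "psid b z > 0"
      using Psi_step.IH psid_pos by auto
    have a: "\<bar>ln (\<psi>' (psi b y)) - ln (\<psi>' (psi b z))\<bar> \<le> Kc * \<bar>psi b y - psi b z\<bar>"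
      using Psi_step.IH psi_in[OF Psi_step.hyps(2)] y z by auto
    have yb: "xs 1 \<le> y" "y \<le> A" "xs 1 \<le> z" "z \<le> A" using y z by auto
    have "Kc * \<bar>psi b y - psi b z\<bar> \<le> Kc * (1 / lam * \<bar>y - z\<bar>)"
      by (rule mult_left_mono[OF psi_contr[OF Psi_step.hyps(2) yb] Kc_nonneg])
    with a have a': "\<bar>ln (\<psi>' (psi b y)) - ln (\<psi>' (psi b z))\<bar> \<le> Kc / lam * \<bar>y - z\<bar>" by simp
    have c: "\<bar>ln (psid b y) - ln (psid b z)\<bar> \<le> Dc * \<bar>y - z\<bar>"
      using psid_lip[OF Psi_step.hyps(2)] y z by auto
    have "\<bar>ln (\<psi>' (psi b y) * psid b y) - ln (\<psi>' (psi b z) * psid b z)\<bar>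
        = \<bar>(ln (\<psi>' (psi b y)) - ln (\<psi>' (psi b z))) + (ln (psid b y) - ln (psid b z))\<bar>"
      using pos by (simp add: ln_mult)
    also have "\<dots> \<le> Kc / lam * \<bar>y - z\<bar> + Dc * \<bar>y - z\<bar>" using a' c by linarith
    also have "\<dots> = (Kc / lam + Dc) * \<bar>y - z\<bar>" by (simp only: distrib_right)
    also have "\<dots> = Kc * \<bar>y - z\<bar>" by (simp only: Kc_eq)
    finally show ?thesis .
  qed
  show ?case using D P L by blast
qed

definition eta :: real where "eta = exp (- Kc * (A - xs 1)) * (Ginv 1 - xs 1) / (A - xs 1)"

lemma eta: "0 < eta" "eta < 1"
proof -
  have a: "A - xs 1 > 0" "Ginv 1 - xs 1 > 0" "Ginv 1 - xs 1 < A - xs 1" using xs1_lt_A Ginv1 by auto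
  show "0 < eta" using a by (simp add: eta_def)
  have "exp (- Kc * (A - xs 1)) \<le> 1" using Kc_nonneg a by simp
  moreover have "(Ginv 1 - xs 1) / (A - xs 1) < 1" using a by simp
  ultimately have "exp (- Kc * (A - xs 1)) * ((Ginv 1 - xs 1) / (A - xs 1)) \<le> (Ginv 1 - xs 1) / (A - xs 1)"
    using a by (intro mult_left_le_one_le) auto
  with \<open>(Ginv 1 - xs 1) / (A - xs 1) < 1\<close>
  have "exp (- Kc * (A - xs 1)) * ((Ginv 1 - xs 1) / (A - xs 1)) < 1" by linarith
  then show "eta < 1" by (simp add: eta_def)
qed

lemma Psi_mono: assumes "(\<psi>, \<psi>') \<in> Psi" "x < y" shows "\<psi> x < \<psi> y"
proof (rule DERIV_pos_imp_increasing[OF assms(2)])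
  fix t show "\<exists>y. (\<psi> has_real_derivative y) (at t) \<and> 0 < y" using Psi_inv[OF assms(1)] by blast
qed

lemma Psi_cont: assumes "(\<psi>, \<psi>') \<in> Psi" shows "continuous_on S \<psi>"
proof (rule continuous_at_imp_continuous_on, rule ballI)
  fix x show "isCont \<psi> x" using Psi_inv[OF assms(1)] DERIV_isCont by blast
qed

lemma Psi_ratio: assumes "(\<psi>, \<psi>') \<in> Psi"
  shows "eta * (\<psi> A - \<psi> (xs 1)) \<le> \<psi> (Ginv 1) - \<psi> (xs 1)"
proof -
  note inv = Psi_inv[OF assms]
  obtain \<xi> where \<xi>: "min (Ginv 1) (xs 1) \<le> \<xi>" "\<xi> \<le> max (Ginv 1) (xs 1)" "\<psi> (Ginv 1) - \<psi> (xs 1) = \<psi>' \<xi> * (Ginv 1 - xs 1)"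
    using mvt_any[where h=\<psi> and h'=\<psi>' and y="Ginv 1" and z="xs 1"] inv by blast
  obtain \<zeta> where \<zeta>: "min A (xs 1) \<le> \<zeta>" "\<zeta> \<le> max A (xs 1)" "\<psi> A - \<psi> (xs 1) = \<psi>' \<zeta> * (A - xs 1)"
    using mvt_any[where h=\<psi> and h'=\<psi>' and y=A and z="xs 1"] inv by blast
  have r: "\<xi> \<in> {xs 1..A}" "\<zeta> \<in> {xs 1..A}" using \<xi> \<zeta> Ginv1 xs1_lt_A by auto
  have "ln (\<psi>' \<zeta>) - ln (\<psi>' \<xi>) \<le> Kc * (A - xs 1)"
  proof -
    have "ln (\<psi>' \<zeta>) - ln (\<psi>' \<xi>) \<le> Kc * \<bar>\<zeta> - \<xi>\<bar>" using inv r by fastforce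
    also have "\<dots> \<le> Kc * (A - xs 1)" using r Kc_nonneg by (intro mult_left_mono) auto
    finally show ?thesis .
  qed
  note lnb = this
  have e1: "\<psi>' \<zeta> \<le> exp (Kc * (A - xs 1)) * \<psi>' \<xi>"
  proof -
    have "\<psi>' \<zeta> = exp (ln (\<psi>' \<zeta>))" using inv by simp
    also have "\<dots> \<le> exp (ln (\<psi>' \<xi>) + Kc * (A - xs 1))" using lnb by simp
    also have "\<dots> = exp (Kc * (A - xs 1)) * \<psi>' \<xi>" using inv by (simp add: exp_add)
    finally show ?thesis .
  qed
  have "exp (- Kc * (A - xs 1)) * \<psi>' \<zeta> \<le> exp (- Kc * (A - xs 1)) * (exp (Kc * (A - xs 1)) * \<psi>' \<xi>)"
    by (rule mult_left_mono[OF e1]) simp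
  also have "\<dots> = \<psi>' \<xi>" by (simp add: mult.assoc[symmetric] flip: exp_add)
  finally have e2: "exp (- Kc * (A - xs 1)) * \<psi>' \<zeta> \<le> \<psi>' \<xi>" .
  have alg: "aa \<noteq> 0 \<Longrightarrow> e * c / aa * (p * aa) = (e * p) * c" for aa e c p :: real
    by (simp add: field_simps)
  have "eta * (\<psi> A - \<psi> (xs 1)) = exp (- Kc * (A - xs 1)) * (Ginv 1 - xs 1) / (A - xs 1) * (\<psi>' \<zeta> * (A - xs 1))"
    by (simp only: eta_def \<zeta>(3))
  also have "\<dots> = (exp (- Kc * (A - xs 1)) * \<psi>' \<zeta>) * (Ginv 1 - xs 1)"
    using xs1_lt_A by (intro alg) simp
  also have "\<dots> \<le> \<psi>' \<xi> * (Ginv 1 - xs 1)"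
    by (rule mult_right_mono[OF e2]) (use Ginv1 in simp)
  finally show ?thesis using \<xi>(3) by simp
qed

end

context sn_core begin

definition Y :: "real set" where "Y = {xs 1<..A}"

primrec Cyl :: "nat \<Rightarrow> real set" where
  "Cyl 0 = Y"
| "Cyl (Suc n) = (\<Union>b\<in>I. psi b ` Cyl n)"

lemma countable_I: "countable I"
  by (rule countable_subset[of _ UNIV]) simp_all

lemma psi_Y: assumes "b \<in> I" "y \<in> Y" shows "psi b y \<in> Y"
  using psi_bounds[OF assms(1), of y] assms(2) Ginv1 by (auto simp: Y_def)

lemma Cyl_sub: "Cyl n \<subseteq> Y"
  by (induction n) (auto simp: psi_Y)

lemma psi_Psi: "b \<in> I \<Longrightarrow> (psi b, \<lambda>y. 1 * psid b y) \<in> Psi"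
  using Psi_step[OF Psi_id] by simp

lemma image_Y: assumes "(\<psi>, \<psi>') \<in> Psi" shows "\<psi> ` Y = {\<psi> (xs 1)<..\<psi> A}"
proof
  show "\<psi> ` Y \<subseteq> {\<psi> (xs 1)<..\<psi> A}"
    using Psi_mono[OF assms] by (auto simp: Y_def less_eq_real_def)
  show "{\<psi> (xs 1)<..\<psi> A} \<subseteq> \<psi> ` Y"
  proof
    fix t assume t: "t \<in> {\<psi> (xs 1)<..\<psi> A}"
    have "\<exists>x\<ge>xs 1. x \<le> A \<and> \<psi> x = t"
      by (rule IVT') (use t xs1_lt_A Psi_cont[OF assms] in auto)
    then obtain x where x: "xs 1 \<le> x" "x \<le> A" "\<psi> x = t" by blast
    have "x \<noteq> xs 1" using x t by auto
    then show "t \<in> \<psi> ` Y" using x by (auto simp: Y_def)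
  qed
qed

lemma key_disj: assumes b: "b \<in> I" "b' \<in> I" and y: "y \<in> Y" "y' \<in> Y" and eq: "psi b y = psi b' y'"
  shows "b = b'"
proof -
  obtain j k where bjk: "b = (j,k)" by (cases b)
  obtain j' k' where bjk': "b' = (j',k')" by (cases b')
  have yr: "xs 1 < y" "y \<le> A" "xs 1 < y'" "y' \<le> A" using y by (auto simp: Y_def)
  have u: "xs (Suc k) < g k y" "g k y \<le> xs k"
    using g_less_iff[of k "xs 1" y] g_xs[of k 1] g_range[of y k] yr by auto
  have u': "xs (Suc k') < g k' y'" "g k' y' \<le> xs k'"
    using g_less_iff[of k' "xs 1" y'] g_xs[of k' 1] g_range[of y' k'] yr by auto
  have u01: "0 < g k y" "g k y < 1" "0 < g k' y'" "g k' y' < 1"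
    using u u' xs_pos[of "Suc k"] xs_pos[of "Suc k'"] xs_le[of k] xs_le[of k'] A by linarith+
  have e: "real j + g k y = real j' + g k' y'" using eq by (simp add: psi_def bjk bjk' Ginv_eq_iff)
  have jj: "j = j'"
  proof (rule ccontr)
    assume "j \<noteq> j'"
    then consider "j < j'" | "j' < j" by linarith
    then show False
    proof cases
      case 1 then have "real j + 1 \<le> real j'" by linarith
      then show False using e u01 by linarith
    next
      case 2 then have "real j' + 1 \<le> real j" by linarith
      then show False using e u01 by linarith
    qed
  qed
  with e have ee: "g k y = g k' y'" by simp
  have "k = k'"
  proof (rule ccontr)
    assume "k \<noteq> k'"
    then consider "k < k'" | "k' < k" by linarith
    then show False
    proof cases
      case 1 then have "xs k' \<le> xs (Suc k)" using xs_antimono by simp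
      then show False using u u' ee by linarith
    next
      case 2 then have "xs k \<le> xs (Suc k')" using xs_antimono by simp
      then show False using u u' ee by linarith
    qed
  qed
  then show ?thesis using jj bjk bjk' by simp
qed

lemma Psi_inj: assumes "(\<psi>, \<psi>') \<in> Psi" "\<psi> x = \<psi> y" shows "x = y"
  using Psi_mono[OF assms(1), of x y] Psi_mono[OF assms(1), of y x] assms(2)
  by (cases x y rule: linorder_cases) auto

lemma meas_Cyl:
  "\<forall>\<psi> \<psi>'. (\<psi>, \<psi>') \<in> Psi \<longrightarrow> \<psi> ` Cyl n \<in> sets lborel \<and>
     emeasure lborel (\<psi> ` Cyl n) \<le> ennreal ((1 - eta) ^ n * (\<psi> A - \<psi> (xs 1)))"
proof (induction n)
  case 0
  show ?case
  proof (intro allI impI conjI)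
    fix \<psi> \<psi>' assume P: "(\<psi>, \<psi>') \<in> Psi"
    have le: "\<psi> (xs 1) \<le> \<psi> A" using Psi_mono[OF P xs1_lt_A] by simp
    show "\<psi> ` Cyl 0 \<in> sets lborel" using image_Y[OF P] by simp
    show "emeasure lborel (\<psi> ` Cyl 0) \<le> ennreal ((1 - eta) ^ 0 * (\<psi> A - \<psi> (xs 1)))"
      using image_Y[OF P] emeasure_lborel_Ioc[OF le] by simp
  qed
next
  case (Suc n)
  show ?case
  proof (intro allI impI)
    fix \<psi> \<psi>' assume P: "(\<psi>, \<psi>') \<in> Psi"
    define X where "X b = (\<lambda>y. \<psi> (psi b y)) ` Cyl n" for b
    define Z where "Z b = (\<lambda>y. \<psi> (psi b y)) ` Y" for b
    have PB: "b \<in> I \<Longrightarrow> ((\<lambda>y. \<psi> (psi b y)), (\<lambda>y. \<psi>' (psi b y) * psid b y)) \<in> Psi" for b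
      using Psi_step[OF P] by simp
    have eq: "\<psi> ` Cyl (Suc n) = (\<Union>b\<in>I. X b)" by (auto simp: X_def image_UN image_image)
    have XZ: "X b \<subseteq> Z b" for b using Cyl_sub by (auto simp: X_def Z_def)
    have Xm: "X b \<in> sets lborel" if "b \<in> I" for b using Suc.IH PB[OF that] by (auto simp: X_def)
    have Xb: "emeasure lborel (X b) \<le> ennreal ((1 - eta) ^ n) * emeasure lborel (Z b)" if b: "b \<in> I" for b
    proof -
      have le: "\<psi> (psi b (xs 1)) \<le> \<psi> (psi b A)" using Psi_mono[OF PB[OF b] xs1_lt_A] by simp
      have Zb: "emeasure lborel (Z b) = ennreal (\<psi> (psi b A) - \<psi> (psi b (xs 1)))"
        using image_Y[OF PB[OF b]] emeasure_lborel_Ioc[OF le] by (simp add: Z_def)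
      have "emeasure lborel (X b) \<le> ennreal ((1 - eta) ^ n * (\<psi> (psi b A) - \<psi> (psi b (xs 1))))"
        using Suc.IH PB[OF b] by (auto simp: X_def)
      also have "\<dots> = ennreal ((1 - eta) ^ n) * emeasure lborel (Z b)"
        using eta by (simp add: Zb ennreal_mult')
      finally show ?thesis .
    qed
    have Zm: "Z b \<in> sets lborel" if "b \<in> I" for b using image_Y[OF PB[OF that]] by (simp add: Z_def)
    have disjX: "disjoint_family_on X I" and disjZ: "disjoint_family_on Z I"
    proof -
      have "Z b \<inter> Z b' = {}" if "b \<in> I" "b' \<in> I" "b \<noteq> b'" for b b'
      proof (rule ccontr)
        assume "Z b \<inter> Z b' \<noteq> {}"
        then obtain y y' where yy: "y \<in> Y" "y' \<in> Y" "\<psi> (psi b y) = \<psi> (psi b' y')" by (auto simp: Z_def)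
        then have "psi b y = psi b' y'" using Psi_inj[OF P] by blast
        then show False using key_disj that yy by blast
      qed
      then show "disjoint_family_on Z I" by (auto simp: disjoint_family_on_def)
      then show "disjoint_family_on X I" unfolding disjoint_family_on_def using XZ by blast
    qed
    have ZU: "(\<Union>b\<in>I. Z b) \<subseteq> {\<psi> (Ginv 1)<..\<psi> A}"
    proof (clarsimp simp: Z_def)
      fix b y assume b: "b \<in> I" and y: "y \<in> Y"
      have "Ginv 1 < psi b y" "psi b y \<le> A" using psi_bounds[OF b, of y] y by (auto simp: Y_def)
      then show "\<psi> (Ginv 1) < \<psi> (psi b y) \<and> \<psi> (psi b y) \<le> \<psi> A"
        using Psi_mono[OF P] by (auto simp: less_eq_real_def)
    qed
    have meas: "\<psi> ` Cyl (Suc n) \<in> sets lborel"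
      unfolding eq using Xm countable_I by (intro sets.countable_UN') auto
    have "emeasure lborel (\<psi> ` Cyl (Suc n)) = (\<integral>\<^sup>+b. emeasure lborel (X b) \<partial>count_space I)"
      unfolding eq by (rule emeasure_UN_countable[OF Xm countable_I disjX])
    also have "\<dots> \<le> (\<integral>\<^sup>+b. ennreal ((1 - eta) ^ n) * emeasure lborel (Z b) \<partial>count_space I)"
      by (rule nn_integral_mono) (use Xb in auto)
    also have "\<dots> = ennreal ((1 - eta) ^ n) * (\<integral>\<^sup>+b. emeasure lborel (Z b) \<partial>count_space I)"
      by (rule nn_integral_cmult) simp
    also have "(\<integral>\<^sup>+b. emeasure lborel (Z b) \<partial>count_space I) = emeasure lborel (\<Union>b\<in>I. Z b)"
      by (rule emeasure_UN_countable[OF Zm countable_I disjZ, symmetric])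
    also have "emeasure lborel (\<Union>b\<in>I. Z b) \<le> emeasure lborel {\<psi> (Ginv 1)<..\<psi> A}"
      by (rule emeasure_mono[OF ZU]) simp
    also have "\<dots> = ennreal (\<psi> A - \<psi> (Ginv 1))"
      using Psi_mono[OF P Ginv1(2)] by (intro emeasure_lborel_Ioc) simp
    finally have 1: "emeasure lborel (\<psi> ` Cyl (Suc n)) \<le> ennreal ((1 - eta) ^ n) * ennreal (\<psi> A - \<psi> (Ginv 1))"
      by (simp add: mult_left_mono)
    have "\<psi> A - \<psi> (Ginv 1) \<le> (1 - eta) * (\<psi> A - \<psi> (xs 1))"
      using Psi_ratio[OF P] by (simp add: algebra_simps)
    then have "(1 - eta) ^ n * (\<psi> A - \<psi> (Ginv 1)) \<le> (1 - eta) ^ n * ((1 - eta) * (\<psi> A - \<psi> (xs 1)))"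
      using eta by (intro mult_left_mono) auto
    then have "ennreal ((1 - eta) ^ n) * ennreal (\<psi> A - \<psi> (Ginv 1)) \<le> ennreal ((1 - eta) ^ Suc n * (\<psi> A - \<psi> (xs 1)))"
      using eta by (simp add: ennreal_mult'[symmetric] mult.assoc ennreal_leI)
    with 1 meas show "\<psi> ` Cyl (Suc n) \<in> sets lborel \<and> emeasure lborel (\<psi> ` Cyl (Suc n)) \<le> ennreal ((1 - eta) ^ Suc n * (\<psi> A - \<psi> (xs 1)))"
      by simp
  qed
qed

lemma Cyl_meas: "Cyl n \<in> sets lborel" "emeasure lborel (Cyl n) \<le> ennreal ((1 - eta) ^ n * (A - xs 1))"
  using meas_Cyl[of n] Psi_id by auto

lemma Cyl_null: "(\<Inter>n. Cyl n) \<in> null_sets lborel"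
proof -
  have m: "(\<Inter>n. Cyl n) \<in> sets lborel" using Cyl_meas(1) by auto
  have sub: "(\<Inter>n. Cyl n) \<subseteq> Y"
  proof
    fix x assume "x \<in> (\<Inter>n. Cyl n)" then have "x \<in> Cyl 0" by blast
    then show "x \<in> Y" by simp
  qed
  have fin: "emeasure lborel (\<Inter>n. Cyl n) \<le> emeasure lborel Y"
    by (rule emeasure_mono[OF sub]) (simp add: Y_def)
  have Yf: "emeasure lborel Y = ennreal (A - xs 1)" using xs1_lt_A by (simp add: Y_def)
  have b: "measure lborel (\<Inter>n. Cyl n) \<le> (1 - eta) ^ n * (A - xs 1)" for n
  proof -
    have "emeasure lborel (\<Inter>n. Cyl n) \<le> emeasure lborel (Cyl n)" by (rule emeasure_mono) (use Cyl_meas(1)[of n] in auto)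
    also have "\<dots> \<le> ennreal ((1 - eta) ^ n * (A - xs 1))" by (rule Cyl_meas)
    finally show ?thesis using eta xs1_lt_A by (simp add: measure_def enn2real_leI)
  qed
  have "(\<lambda>n. (1 - eta) ^ n * (A - xs 1)) \<longlonglongrightarrow> 0 * (A - xs 1)"
    using eta by (intro tendsto_mult LIMSEQ_power_zero tendsto_const) auto
  then have "measure lborel (\<Inter>n. Cyl n) \<le> 0"
    using b by (intro LIMSEQ_le_const[of _ 0]) auto
  then have "measure lborel (\<Inter>n. Cyl n) = 0" by (simp add: measure_nonneg antisym)
  moreover have "emeasure lborel (\<Inter>n. Cyl n) < \<infinity>" using fin Yf by (simp add: order_le_less_trans)
  ultimately show ?thesis using m by (simp add: null_sets_def emeasure_eq_ennreal_measure)
qed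

end

context sn_core begin

definition f :: "real \<Rightarrow> real" where "f x = frac (G x)"
definition Lam :: "real set" where "Lam = {x. \<forall>n. (f ^^ n) x \<in> {0<..A}}"

lemma Lam_shift: assumes "x \<in> Lam" shows "(f ^^ k) x \<in> Lam"
  unfolding Lam_def mem_Collect_eq
proof (rule allI)
  fix n
  have "(f ^^ n) ((f ^^ k) x) = (f ^^ (n + k)) x" by (simp add: funpow_add)
  then show "(f ^^ n) ((f ^^ k) x) \<in> {0<..A}" using assms unfolding Lam_def by simp
qed

lemma Lam_K: assumes "x \<in> Lam" shows "0 < x \<and> x \<le> A"
proof -
  have "(f ^^ 0) x \<in> {0<..A}" using assms unfolding Lam_def by blast
  then show ?thesis by simp
qed

lemma Lam_f: "x \<in> Lam \<Longrightarrow> 0 < f x \<and> f x \<le> A"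
  using Lam_K[OF Lam_shift[of x 1]] by simp

lemma descend: "xs (Suc k) < z \<Longrightarrow> z \<le> xs k \<Longrightarrow> (f ^^ k) z \<in> Y \<and> g k ((f ^^ k) z) = z"
proof (induction k arbitrary: z)
  case 0 then show ?case by (simp add: Y_def)
next
  case (Suc k)
  have Gz: "xs (Suc k) < G z" "G z \<le> xs k"
    using Suc.prems G_less_iff[of "xs (Suc (Suc k))" z] G_le_iff[of z "xs (Suc k)"] G_xs by auto
  have "G z \<in> {0..<1}" using Gz xs_pos[of "Suc k"] xs_le[of k] A by auto
  then have fz: "f z = G z" by (simp add: f_def)
  have IH: "(f ^^ k) (f z) \<in> Y \<and> g k ((f ^^ k) (f z)) = f z" using Suc.IH[of "f z"] Gz fz by simp
  have "(f ^^ Suc k) z = (f ^^ k) (f z)" by (simp add: funpow_Suc_right del: funpow.simps)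
  then show ?case using IH fz by (simp add: g_Suc)
qed

lemma find_k: assumes "0 < z" "z \<le> A" shows "\<exists>k. xs (Suc k) < z \<and> z \<le> xs k"
proof -
  have "\<exists>m. xs m < z"
  proof -
    have "\<forall>\<^sub>F m in sequentially. xs m < z" using xs_lim assms(1) by (rule order_tendstoD)
    then show ?thesis by (meson eventually_sequentially order.refl)
  qed
  define m where "m = (LEAST m. xs m < z)"
  have m: "xs m < z" unfolding m_def using \<open>\<exists>m. xs m < z\<close> by (rule LeastI_ex)
  have "m \<noteq> 0"
  proof
    assume "m = 0" then have "A < z" using m by simp
    with assms show False by simp
  qed
  then obtain k where k: "m = Suc k" by (cases m) auto
  have "\<not> xs k < z" using not_less_Least[of k "\<lambda>m. xs m < z"] k unfolding m_def by simp
  then show ?thesis using m k by (intro exI[of _ k]) simp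
qed

lemma Lam_step: assumes x: "x \<in> Lam" "x \<in> Y" shows "\<exists>b\<in>I. \<exists>y\<in>Lam \<inter> Y. x = psi b y"
proof -
  have fx: "0 < f x" "f x \<le> A" using Lam_f[OF x(1)] by auto
  have xr: "xs 1 < x" "x \<le> A" using x(2) by (auto simp: Y_def)
  have Gx: "A < G x" "G x \<le> A + of_int d - 1"
    using G_less_iff[of "xs 1" x] G_le_iff[of x A] xr GA by (auto simp: xs_Suc)
  define fl where "fl = \<lfloor>G x\<rfloor>"
  have fxe: "f x = G x - of_int fl" by (simp add: f_def fl_def frac_def)
  have fl1: "fl \<ge> 1"
  proof (rule ccontr)
    assume "\<not> fl \<ge> 1"
    moreover have "fl \<ge> 0" using Gx A unfolding fl_def by linarith
    ultimately have "fl = 0" by simp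
    then show False using fxe fx Gx by simp
  qed
  have fld: "fl < d"
  proof -
    have "G x < of_int d" using Gx A by linarith
    then show ?thesis unfolding fl_def by linarith
  qed
  define j where "j = nat fl"
  have jI: "1 \<le> j" "j < nat d" using fl1 fld by (auto simp: j_def)
  have jr: "real j = of_int fl" using fl1 by (simp add: j_def)
  obtain k where k: "xs (Suc k) < f x" "f x \<le> xs k" using find_k[OF fx] by blast
  define y where "y = (f ^^ k) (f x)"
  have yY: "y \<in> Y" and gy: "g k y = f x" using descend[OF k] by (auto simp: y_def)
  have yeq: "y = (f ^^ Suc k) x" by (simp add: y_def funpow_Suc_right del: funpow.simps)
  have yL: "y \<in> Lam" unfolding yeq by (rule Lam_shift[OF x(1)])
  have "psi (j, k) y = Ginv (of_int fl + f x)" by (simp add: psi_def gy jr)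
  also have "\<dots> = x" using fxe by simp
  finally have "x = psi (j,k) y" by simp
  moreover have "(j,k) \<in> I" using jI by (simp add: I_def)
  ultimately show ?thesis using yY yL by blast
qed

lemma Lam_Cyl: "Lam \<inter> Y \<subseteq> Cyl n"
proof (induction n)
  case 0 then show ?case by simp
next
  case (Suc n)
  show ?case
  proof
    fix x assume "x \<in> Lam \<inter> Y"
    then obtain b y where "b \<in> I" "y \<in> Lam \<inter> Y" "x = psi b y" using Lam_step by blast
    then show "x \<in> Cyl (Suc n)" using Suc.IH by auto
  qed
qed

lemma Lam_cover: "Lam \<subseteq> (\<Union>k. g k ` (\<Inter>n. Cyl n))"
proof
  fix x assume x: "x \<in> Lam"
  obtain k where k: "xs (Suc k) < x" "x \<le> xs k" using find_k Lam_K[OF x] by blast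
  define y where "y = (f ^^ k) x"
  have "y \<in> Y" "g k y = x" using descend[OF k] by (auto simp: y_def)
  moreover have "y \<in> Lam" using Lam_shift[OF x] by (simp add: y_def)
  ultimately have "y \<in> (\<Inter>n. Cyl n)" using Lam_Cyl by blast
  then show "x \<in> (\<Union>k. g k ` (\<Inter>n. Cyl n))" using \<open>g k y = x\<close> by blast
qed

lemma Lam_null: "Lam \<in> null_sets lebesgue"
proof -
  have N: "negligible (\<Inter>n. Cyl n)"
    using Cyl_null by (simp add: negligible_iff_null_sets null_sets_completionI)
  have "negligible (g k ` (\<Inter>n. Cyl n))" for k
  proof (rule negligible_differentiable_image_negligible[OF order_refl N])
    show "g k differentiable_on (\<Inter>n. Cyl n)"
      unfolding differentiable_on_def
    proof
      fix y
      have "(g k has_derivative (*) (gd k y)) (at y)" by (rule has_field_derivative_imp_has_derivative[OF g_deriv])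
      then have "(g k has_derivative (*) (gd k y)) (at y within (\<Inter>n. Cyl n))" by (rule has_derivative_at_withinI)
      then show "g k differentiable (at y within (\<Inter>n. Cyl n))" by (rule differentiableI)
    qed
  qed
  then have "negligible (\<Union>k. g k ` (\<Inter>n. Cyl n))" by (intro negligible_countable_Union) auto
  then have "negligible Lam" using Lam_cover negligible_subset by blast
  then show ?thesis by (simp add: negligible_iff_null_sets)
qed

end

lemma cesaro0:
  fixes b :: "nat \<Rightarrow> real"
  assumes "b \<longlonglongrightarrow> 0"
  shows "(\<lambda>n. (\<Sum>i<n. b i) / real n) \<longlonglongrightarrow> 0"
proof (rule LIMSEQ_I)
  fix e :: real assume e: "e > 0"
  obtain N where N: "\<And>i. i \<ge> N \<Longrightarrow> \<bar>b i\<bar> < e / 2"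
    using LIMSEQ_D[OF assms, of "e/2"] e by auto
  define C where "C = (\<Sum>i<N. \<bar>b i\<bar>)"
  have C0: "C \<ge> 0" by (simp add: C_def sum_nonneg)
  obtain M :: nat where M: "M > 2 * C / e" using reals_Archimedean2 by blast
  show "\<exists>no. \<forall>n\<ge>no. norm ((\<Sum>i<n. b i) / real n - 0) < e"
  proof (intro exI[of _ "max (Suc N) M"] allI impI)
    fix n assume n: "n \<ge> max (Suc N) M"
    then have nN: "N \<le> n" and npos: "real n > 0" by auto
    have split: "{..<n} = {..<N} \<union> {N..<n}" using nN by auto
    have "\<bar>\<Sum>i<n. b i\<bar> \<le> (\<Sum>i<n. \<bar>b i\<bar>)" by (rule sum_abs)
    also have "\<dots> = C + (\<Sum>i\<in>{N..<n}. \<bar>b i\<bar>)"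
      unfolding C_def split by (rule sum.union_disjoint) auto
    also have "(\<Sum>i\<in>{N..<n}. \<bar>b i\<bar>) \<le> (\<Sum>i\<in>{N..<n}. e / 2)"
    proof (rule sum_mono)
      fix i assume "i \<in> {N..<n}" then show "\<bar>b i\<bar> \<le> e / 2" using N[of i] by simp
    qed
    also have "\<dots> = real (n - N) * (e / 2)" by simp
    also have "\<dots> \<le> real n * (e / 2)" using e by (intro mult_right_mono) auto
    finally have 1: "\<bar>\<Sum>i<n. b i\<bar> \<le> C + real n * (e / 2)" by simp
    have "real n \<ge> real M" using n by auto
    then have "real n > 2 * C / e" using M by linarith
    then have 2: "C < real n * (e / 2)" using e by (simp add: field_simps)
    have "\<bar>\<Sum>i<n. b i\<bar> < real n * e" using 1 2 by linarith
    then show "norm ((\<Sum>i<n. b i) / real n - 0) < e"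
      using npos by (simp add: abs_divide field_simps)
  qed
qed

lemma cesaro:
  fixes a :: "nat \<Rightarrow> real"
  assumes "a \<longlonglongrightarrow> L"
  shows "(\<lambda>n. (\<Sum>i<n. a i) / real n) \<longlonglongrightarrow> L"
proof -
  have "(\<lambda>i. a i - L) \<longlonglongrightarrow> 0" using assms by (simp add: LIM_zero)
  then have "(\<lambda>n. (\<Sum>i<n. a i - L) / real n) \<longlonglongrightarrow> 0" by (rule cesaro0)
  then have "(\<lambda>n. (\<Sum>i<n. a i - L) / real n + L) \<longlonglongrightarrow> 0 + L" by (intro tendsto_add) auto
  moreover have "\<forall>\<^sub>F n in sequentially. (\<Sum>i<n. a i - L) / real n + L = (\<Sum>i<n. a i) / real n"
    using eventually_gt_at_top[of 0]
    by eventually_elim (simp add: sum_subtractf field_simps)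
  ultimately show ?thesis by (simp add: tendsto_cong)
qed

lemma cdist0_le_abs: "cdist0 z \<le> \<bar>z\<bar>"
proof (cases "z \<ge> 0")
  case True
  have "frac z \<le> z" using True by (simp add: frac_def)
  then show ?thesis using True by (simp add: cdist0_def)
next
  case False
  have "\<lfloor>z\<rfloor> \<le> -1" using False by linarith
  then have "1 - frac z \<le> - z" by (simp add: frac_def)
  then show ?thesis using False by (simp add: cdist0_def)
qed

lemma cdist0_frac[simp]: "cdist0 (frac z) = cdist0 z" by (simp add: cdist0_def)

lemma cdist0_unit: "y \<in> {0..<1} \<Longrightarrow> cdist0 y = min y (1 - y)" by (simp add: cdist0_def)

lemma cdist0_zero_iff: "cdist0 z = 0 \<longleftrightarrow> z \<in> \<int>"
proof -
  have "cdist0 z = 0 \<longleftrightarrow> frac z = 0" using frac_lt_1[of z] frac_ge_0[of z] by (auto simp: cdist0_def min_def simp del: frac_eq_0_iff)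
  then show ?thesis by simp
qed

lemma periodic_conv:
  fixes \<phi> :: "real \<Rightarrow> real"
  assumes cont: "continuous_on UNIV \<phi>" and per: "\<forall>y. \<phi> (y + 1) = \<phi> y"
    and y: "\<And>j. y j \<in> {0..<1}" and c: "(\<lambda>j. cdist0 (y j)) \<longlonglongrightarrow> 0"
  shows "(\<lambda>j. \<phi> (y j)) \<longlonglongrightarrow> \<phi> 0"
proof -
  define z where "z j = (if y j \<le> 1/2 then y j else y j - 1)" for j
  have zc: "\<bar>z j\<bar> = cdist0 (y j)" for j
    using y[of j] by (auto simp: z_def cdist0_unit min_def)
  have "(\<lambda>j. \<bar>z j\<bar>) \<longlonglongrightarrow> 0" using c by (simp add: zc)
  then have "z \<longlonglongrightarrow> 0" by (simp add: tendsto_rabs_zero_iff)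
  moreover have "isCont \<phi> 0" using cont by (simp add: continuous_on_eq_continuous_at)
  ultimately have "(\<lambda>j. \<phi> (z j)) \<longlonglongrightarrow> \<phi> 0" by (simp add: isCont_tendsto_compose)
  moreover have "\<phi> (z j) = \<phi> (y j)" for j
    using per[rule_format, of "y j - 1"] by (simp add: z_def)
  ultimately show ?thesis by simp
qed

lemma periodic_int:
  fixes H :: "real \<Rightarrow> real"
  assumes per: "\<And>x. H (x + 1) = H x + c"
  shows "H (x + of_int m) = H x + c * of_int m"
proof (induction m rule: int_induct[where k=0])
  case base then show ?case by simp
next
  case (step1 i)
  have "H (x + of_int (i+1)) = H ((x + of_int i) + 1)" by (simp add: add.assoc)
  also have "\<dots> = H (x + of_int i) + c" by (rule per)
  also have "\<dots> = H x + c * of_int (i+1)" using step1 by (simp add: algebra_simps)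
  finally show ?case .
next
  case (step2 i)
  have "H (x + of_int i) = H ((x + of_int (i - 1)) + 1)" by (simp add: add.assoc)
  also have "\<dots> = H (x + of_int (i - 1)) + c" by (rule per)
  finally show ?case using step2 by (simp add: algebra_simps)
qed

locale thmA =
  fixes F :: "real \<Rightarrow> real" and d k0 :: int
  assumes F_deriv: "\<And>x. (F has_real_derivative deriv F x) (at x)"
    and F'_deriv: "\<And>x. (deriv F has_real_derivative deriv (deriv F) x) (at x)"
    and F''_cont: "continuous_on UNIV (deriv (deriv F))"
    and F_per: "\<And>x. F (x + 1) = F x + of_int d"
    and F0: "F 0 = of_int k0"
    and F'0: "deriv F 0 = 1" and F''0: "deriv (deriv F) 0 > 0"
    and F'_nz: "\<And>x. deriv F x \<noteq> 0"
    and expanding: "\<forall>x\<in>{0..<1} - W0 F. \<bar>deriv F x\<bar> > 1"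
begin

definition G :: "real \<Rightarrow> real" where "G x = F x - of_int k0"
abbreviation G' where "G' \<equiv> deriv F"
abbreviation G'' where "G'' \<equiv> deriv (deriv F)"
abbreviation cm where "cm \<equiv> circ_map F"

lemma G_deriv: "(G has_real_derivative G' x) (at x)"
  unfolding G_def[abs_def] using DERIV_diff[OF F_deriv DERIV_const] by simp

lemma G'_cont: "isCont G' x" using F'_deriv DERIV_isCont by blast
lemma G_cont: "isCont G x" using G_deriv DERIV_isCont by blast

lemma G'_pos: "G' x > 0"
proof (rule ccontr)
  assume "\<not> G' x > 0"
  then have x: "G' x < 0" using F'_nz[of x] by linarith
  have c: "\<forall>t. min x 0 \<le> t \<and> t \<le> max x 0 \<longrightarrow> isCont G' t" using G'_cont by blast
  show False
  proof (cases "x \<le> 0")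
    case True
    have "\<exists>t\<ge>x. t \<le> 0 \<and> G' t = 0" by (rule IVT) (use True x F'0 G'_cont in auto)
    then show False using F'_nz by blast
  next
    case False
    have "\<exists>t\<ge>0. t \<le> x \<and> G' t = 0" by (rule IVT2) (use False x F'0 G'_cont in auto)
    then show False using F'_nz by blast
  qed
qed

lemma G_per: "G (x + 1) = G x + of_int d" by (simp add: G_def F_per)
lemma G0: "G 0 = 0" by (simp add: G_def F0)

lemma G_less: "x < y \<Longrightarrow> G x < G y"
  using DERIV_pos_imp_increasing[of x y G] G_deriv G'_pos by blast
lemma G_le: "x \<le> y \<Longrightarrow> G x \<le> G y"
  using G_less[of x y] by (cases "x = y") auto

lemma cm_eq: "cm x = frac (G x)"
proof -
  have "F x = G x + of_int k0" by (simp add: G_def)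
  then show ?thesis by (simp add: circ_map_def)
qed

lemma cm_fun: "cm = (\<lambda>x. frac (G x))" using cm_eq by auto

lemma G_frac: "frac (G (frac y)) = frac (G y)"
proof -
  have "frac y = y + of_int (- \<lfloor>y\<rfloor>)" by (simp add: frac_def)
  then have "G (frac y) = G y + of_int (d * (- \<lfloor>y\<rfloor>))"
    using periodic_int[of G "of_int d" y "- \<lfloor>y\<rfloor>"] G_per by simp
  then show ?thesis by (simp only: frac_add_of_int_right)
qed

lemma cm_iter: "(cm ^^ n) (frac y) = frac ((G ^^ n) y)"
  by (induction n) (simp_all add: cm_eq G_frac)

definition S :: "real set" where "S = {x. frac x \<in> basin0 F}"
definition Cc where "Cc = connected_component_set S 0"

lemma W0_eq: "W0 F = frac ` Cc" by (simp add: W0_def Cc_def S_def)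

lemma S_iff: "x \<in> S \<longleftrightarrow> (\<lambda>k. cdist0 ((G ^^ k) x)) \<longlonglongrightarrow> 0"
proof -
  have "frac x \<in> {0..<1}" using frac_lt_1 by auto
  moreover have "cdist0 ((cm ^^ k) (frac x)) = cdist0 ((G ^^ k) x)" for k by (simp add: cm_iter)
  ultimately show ?thesis by (simp add: S_def basin0_def)
qed

lemma S_G: "G x \<in> S \<longleftrightarrow> x \<in> S"
proof -
  have "(G ^^ k) (G x) = (G ^^ Suc k) x" for k by (simp add: funpow_Suc_right del: funpow.simps)
  then have "(\<lambda>k. cdist0 ((G ^^ k) (G x))) = (\<lambda>k. cdist0 ((G ^^ Suc k) x))" by simp
  then show ?thesis unfolding S_iff using filterlim_sequentially_Suc[of "\<lambda>k. cdist0 ((G ^^ k) x)"] by simp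
qed

lemma fixed_not_S: assumes "G p = p" "p \<notin> \<int>" shows "p \<notin> S"
proof
  assume "p \<in> S"
  moreover have "(G ^^ k) p = p" for k by (induction k) (simp_all add: assms(1))
  ultimately have "(\<lambda>k. cdist0 p) \<longlonglongrightarrow> 0" by (simp add: S_iff)
  then have "cdist0 p = 0" by (simp add: LIMSEQ_const_iff)
  then show False using assms(2) cdist0_zero_iff by blast
qed

lemma local_sn: "\<exists>\<delta>>0. \<delta> < 1/2 \<and> (\<forall>t. -\<delta> \<le> t \<and> t < 0 \<longrightarrow> G' t < 1) \<and> (\<forall>t. 0 < t \<and> t \<le> \<delta> \<longrightarrow> G' t > 1)"
proof -
  have "isCont G'' 0" using F''_cont by (simp add: continuous_on_eq_continuous_at)
  then have "\<forall>\<^sub>F t in at 0. G'' t > 0"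
    using order_tendstoD(1)[OF _ F''0] unfolding isCont_def by blast
  then obtain e where e: "e > 0" "\<And>t. t \<noteq> 0 \<Longrightarrow> dist t 0 < e \<Longrightarrow> G'' t > 0"
    unfolding eventually_at by blast
  define \<delta> where "\<delta> = min (e/2) (1/4)"
  have \<delta>: "\<delta> > 0" "\<delta> < 1/2" "\<delta> < e" using e by (auto simp: \<delta>_def)
  have pos: "G'' t > 0" if "\<bar>t\<bar> \<le> \<delta>" for t
    using e(2)[of t] F''0 that \<delta> by (cases "t = 0") auto
  have inc: "G' s < G' t" if "-\<delta> \<le> s" "s < t" "t \<le> \<delta>" for s t
  proof (rule DERIV_pos_imp_increasing[OF that(2)])
    fix x assume x: "s \<le> x" "x \<le> t"
    have "\<bar>x\<bar> \<le> \<delta>" using x that by auto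
    then show "\<exists>y. (G' has_real_derivative y) (at x) \<and> 0 < y" using F'_deriv[of x] pos[of x] by blast
  qed
  show ?thesis
  proof (intro exI[of _ \<delta>] conjI allI impI)
    fix t assume "-\<delta> \<le> t \<and> t < 0" then show "G' t < 1" using inc[of t 0] \<delta> F'0 by auto
  next
    fix t assume "0 < t \<and> t \<le> \<delta>" then show "G' t > 1" using inc[of 0 t] \<delta> F'0 by auto
  qed (use \<delta> in auto)
qed

definition dl :: real where "dl = (SOME \<delta>. \<delta>>0 \<and> \<delta> < 1/2 \<and> (\<forall>t. -\<delta> \<le> t \<and> t < 0 \<longrightarrow> G' t < 1) \<and> (\<forall>t. 0 < t \<and> t \<le> \<delta> \<longrightarrow> G' t > 1))"

lemma dl: "dl > 0" "dl < 1/2" "\<And>t. -dl \<le> t \<Longrightarrow> t < 0 \<Longrightarrow> G' t < 1" "\<And>t. 0 < t \<Longrightarrow> t \<le> dl \<Longrightarrow> G' t > 1"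
proof -
  have "dl>0 \<and> dl < 1/2 \<and> (\<forall>t. -dl \<le> t \<and> t < 0 \<longrightarrow> G' t < 1) \<and> (\<forall>t. 0 < t \<and> t \<le> dl \<longrightarrow> G' t > 1)"
    unfolding dl_def by (rule someI_ex) (rule local_sn)
  then show "dl > 0" "dl < 1/2" "\<And>t. -dl \<le> t \<Longrightarrow> t < 0 \<Longrightarrow> G' t < 1" "\<And>t. 0 < t \<Longrightarrow> t \<le> dl \<Longrightarrow> G' t > 1"
    by auto
qed

lemma G_gt_left: assumes "-dl \<le> y" "y < 0" shows "y < G y" "G y < 0"
proof -
  have "\<exists>z>y. z < 0 \<and> G 0 - G y = (0 - y) * G' z"
    by (rule MVT2) (use assms G_deriv in auto)
  then obtain z where z: "y < z" "z < 0" "G 0 - G y = (0 - y) * G' z" by blast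
  have "G' z < 1" using dl(3)[of z] z assms by auto
  then have "(0 - y) * G' z < (0 - y)" using assms by (simp add: mult_less_cancel_left1)
  then show "y < G y" using z G0 by linarith
  show "G y < 0" using G_less[OF assms(2)] G0 by simp
qed

lemma G_gt_right: assumes "0 < y" "y \<le> dl" shows "y < G y"
proof -
  have "\<exists>z>0. z < y \<and> G y - G 0 = (y - 0) * G' z"
    by (rule MVT2) (use assms G_deriv in auto)
  then obtain z where z: "0 < z" "z < y" "G y - G 0 = (y - 0) * G' z" by blast
  have "G' z > 1" using dl(4)[of z] z assms by auto
  then have "y < (y - 0) * G' z" using assms by simp
  then show ?thesis using z G0 by linarith
qed

lemma left_in_S: assumes "-dl \<le> x" "x \<le> 0" shows "x \<in> S"
proof (cases "x = 0")
  case True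
  have "(G ^^ k) 0 = 0" for k by (induction k) (simp_all add: G0)
  then show ?thesis using True by (simp add: S_iff cdist0_def)
next
  case False
  then have x: "-dl \<le> x" "x < 0" using assms by auto
  define s where "s k = (G ^^ k) x" for k
  have sr: "x \<le> s k \<and> s k < 0" for k
  proof (induction k)
    case 0 then show ?case using x by (simp add: s_def)
  next
    case (Suc k)
    have "s (Suc k) = G (s k)" by (simp add: s_def)
    then show ?case using G_gt_left[of "s k"] Suc x by auto
  qed
  have step: "s (Suc k) = G (s k)" for k by (simp add: s_def)
  have inc: "incseq s"
  proof (rule incseq_SucI)
    fix n
    have "-dl \<le> s n" "s n < 0" using sr[of n] x by auto
    then show "s n \<le> s (Suc n)" using G_gt_left(1)[of "s n"] step[of n] by simp
  qed
  have bdd: "bdd_above (range s)"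
  proof (rule bdd_aboveI[of _ 0])
    fix y assume "y \<in> range s" then show "y \<le> 0" using sr by (auto intro: less_imp_le)
  qed
  define L where "L = (SUP k. s k)"
  have lim: "s \<longlonglongrightarrow> L" unfolding L_def by (rule LIMSEQ_incseq_SUP[OF bdd inc])
  have L0: "L \<le> 0" using lim sr by (intro LIMSEQ_le_const2[OF lim]) (auto intro: less_imp_le)
  have Lx: "x \<le> L" using lim sr by (intro LIMSEQ_le_const[OF lim]) auto
  have "(\<lambda>k. G (s k)) \<longlonglongrightarrow> G L" using G_cont lim by (rule isCont_tendsto_compose)
  moreover have "(\<lambda>k. G (s k)) \<longlonglongrightarrow> L" using lim unfolding step[symmetric] by (rule LIMSEQ_Suc)
  ultimately have GL: "G L = L" using LIMSEQ_unique by blast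
  have "L = 0"
  proof (rule ccontr)
    assume "L \<noteq> 0" then have "L < 0" using L0 by simp
    then show False using G_gt_left[of L] GL Lx x by auto
  qed
  then have "s \<longlonglongrightarrow> 0" using lim by simp
  then have ab: "(\<lambda>k. \<bar>s k\<bar>) \<longlonglongrightarrow> 0" by (rule tendsto_rabs_zero)
  have nn: "0 \<le> cdist0 (s k)" for k using frac_lt_1[of "s k"] by (simp add: cdist0_def)
  have "(\<lambda>k. cdist0 (s k)) \<longlonglongrightarrow> 0"
  proof (rule tendsto_sandwich[OF _ _ tendsto_const ab])
    show "\<forall>\<^sub>F n in sequentially. 0 \<le> cdist0 (s n)" using nn by simp
    show "\<forall>\<^sub>F n in sequentially. cdist0 (s n) \<le> \<bar>s n\<bar>" using cdist0_le_abs by simp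
  qed
  then show ?thesis by (simp add: S_iff s_def)
qed

lemma Cc_S: "Cc \<subseteq> S" by (simp add: Cc_def connected_component_subset)
lemma Cc_0: "0 \<in> Cc" using left_in_S[of 0] dl by (simp add: Cc_def)
lemma Cc_interval: "is_interval Cc"
  by (simp add: Cc_def is_interval_connected_1)
lemma Cc_max: "connected T \<Longrightarrow> 0 \<in> T \<Longrightarrow> T \<subseteq> S \<Longrightarrow> T \<subseteq> Cc"
  unfolding Cc_def by (rule connected_component_maximal)
lemma Cc_left: "{-dl..0} \<subseteq> Cc"
  by (rule Cc_max) (use dl left_in_S in auto)
lemma Cc_G: "G ` Cc \<subseteq> Cc"
proof (rule Cc_max)
  show "connected (G ` Cc)"
    by (rule connected_continuous_image) (auto simp: Cc_def continuous_at_imp_continuous_on G_cont)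
  show "0 \<in> G ` Cc" using Cc_0 G0 by force
  show "G ` Cc \<subseteq> S" using Cc_S S_G by auto
qed
lemma Cc_between: "a \<in> Cc \<Longrightarrow> b \<in> Cc \<Longrightarrow> a \<le> x \<Longrightarrow> x \<le> b \<Longrightarrow> x \<in> Cc"
  using Cc_interval unfolding is_interval_1 by blast

end

context thmA begin

definition Lp :: "real set" where "Lp = {x\<in>{0..<1}. \<forall>n. (cm ^^ n) x \<notin> W0 F}"

lemma trivial_case: assumes U: "{u<..<u+1} \<subseteq> Cc" shows "Lp \<subseteq> {frac u}"
proof
  fix x assume x: "x \<in> Lp"
  then have x01: "x \<in> {0..<1}" and nW: "x \<notin> W0 F"
    unfolding Lp_def by (auto dest: spec[of _ 0])
  show "x \<in> {frac u}"
  proof (rule ccontr)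
    assume ne: "x \<notin> {frac u}"
    define t where "t = u + frac (x - u)"
    have "t - x = - of_int \<lfloor>x - u\<rfloor>" by (simp add: t_def frac_def)
    then have "t - x \<in> \<int>" by simp
    then have ft: "frac t = x" using x01 by (simp add: frac_unique_iff)
    have "x - u \<notin> \<int>"
    proof
      assume "x - u \<in> \<int>"
      then obtain m where "x - u = of_int m" by (auto elim: Ints_cases)
      then have "x = u + of_int m" by simp
      then have "frac x = frac u" by simp
      then show False using ne x01 by simp
    qed
    then have "0 < frac (x - u)" by simp
    moreover have "frac (x - u) < 1" by (rule frac_lt_1)
    ultimately have "t \<in> Cc" using U by (auto simp: t_def)
    then have "x \<in> W0 F" using ft by (auto simp: W0_eq)
    then show False using nW by simp
  qed
qed

lemma nontrivial_case:
  assumes NT: "\<not> (\<exists>u. {u<..<u+1} \<subseteq> Cc)"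
  shows "Lp \<in> null_sets lebesgue"
proof -
  have lowb: "c > -1" if c: "c \<in> Cc" for c
  proof (rule ccontr)
    assume "\<not> c > -1"
    then have "{-1<..<(-1)+1} \<subseteq> Cc" using Cc_between[OF c Cc_0] by auto
    with NT show False by blast
  qed
  have ne: "Cc \<noteq> {}" using Cc_0 by auto
  have bb: "bdd_below Cc"
  proof (rule bdd_belowI[of _ "-1"])
    fix c assume "c \<in> Cc" then show "-1 \<le> c" using lowb[of c] by simp
  qed
  define a where "a = Inf Cc"
  have a_le: "a \<le> c" if "c \<in> Cc" for c unfolding a_def using cInf_lower[OF that bb] .
  have "-dl \<in> {-dl..0}" using dl(1) by simp
  then have "-dl \<in> Cc" using Cc_left by blast
  then have a_dl: "a \<le> -dl" using a_le by blast
  have above: "t \<in> Cc" if at: "a < t" "t \<le> 0" for t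
  proof -
    obtain c where "c \<in> Cc" "c < t" using cInf_less_iff[OF ne bb, of t] at(1) a_def by auto
    then show ?thesis using Cc_between[OF _ Cc_0, of c t] at by auto
  qed
  have len: "c < a + 1" if c: "c \<in> Cc" for c
  proof (rule ccontr)
    assume "\<not> c < a + 1"
    have "{a<..<a+1} \<subseteq> Cc"
    proof
      fix t assume t: "t \<in> {a<..<a+1}"
      obtain c' where "c' \<in> Cc" "c' < t" using cInf_less_iff[OF ne bb, of t] t a_def by auto
      then show "t \<in> Cc" using Cc_between[OF _ c, of c' t] t \<open>\<not> c < a + 1\<close> by auto
    qed
    with NT show False by blast
  qed
  have nonpos: "c \<le> 0" if c: "c \<in> Cc" for c
  proof (rule ccontr)
    assume "\<not> c \<le> 0"
    then have c0: "c > 0" by simp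
    define x0 where "x0 = min dl c"
    have x0: "0 < x0" "x0 \<le> dl" "x0 \<le> c" using c0 dl by (auto simp: x0_def)
    have x0C: "x0 \<in> Cc" using Cc_between[OF Cc_0 c, of x0] x0 by auto
    have Gx0: "x0 < G x0" using G_gt_right x0 by auto
    define s where "s k = (G ^^ k) x0" for k
    have sC: "s k \<in> Cc \<and> x0 \<le> s k" for k
    proof (induction k)
      case 0 then show ?case using x0C by (simp add: s_def)
    next
      case (Suc k)
      have e: "s (Suc k) = G (s k)" by (simp add: s_def)
      have "G (s k) \<in> Cc" using Cc_G Suc by auto
      moreover have "G x0 \<le> G (s k)" using G_le Suc by auto
      ultimately show ?case using e Gx0 by auto
    qed
    have lb: "x0 \<le> cdist0 (s k)" for k
    proof -
      have "s k < a + 1" using len sC by blast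
      then have sk: "x0 \<le> s k" "s k < 1 - dl" using a_dl sC by auto
      then have "s k \<in> {0..<1}" using x0 dl by auto
      then show ?thesis using sk x0 by (simp add: cdist0_unit)
    qed
    have "x0 \<in> S" using x0C Cc_S by auto
    then have "(\<lambda>k. cdist0 (s k)) \<longlonglongrightarrow> 0" by (simp add: S_iff s_def)
    then have "x0 \<le> 0" using lb by (intro LIMSEQ_le_const) auto
    then show False using x0 by simp
  qed
  have a_gt: "a > -1" using len[OF Cc_0] by simp
  have a_neg: "a < 0" using a_dl dl(1) by simp
  have a_notInt: "a \<notin> \<int>"
  proof
    assume "a \<in> \<int>"
    then obtain m where "a = of_int m" by (auto elim: Ints_cases)
    then show False using a_gt a_neg by auto
  qed
  have a_notin: "a \<notin> Cc"
  proof
    assume aC: "a \<in> Cc"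
    have GaC: "G a \<in> Cc" using Cc_G aC by auto
    then have Ga1: "a \<le> G a" "G a \<le> 0" using a_le nonpos by auto
    have "G a \<noteq> a" using fixed_not_S[of a] a_notInt aC Cc_S by auto
    then have Ga2: "a < G a" using Ga1 by simp
    obtain e where e: "e > 0" "\<And>y. y \<noteq> a \<Longrightarrow> norm (y - a) < e \<Longrightarrow> norm (G y - G a) < G a - a"
      using LIM_D[OF G_cont[of a, unfolded isCont_def], of "G a - a"] Ga2 by auto
    define x where "x = a - e/2"
    have xa: "x < a" using e by (simp add: x_def)
    have "norm (G x - G a) < G a - a" using e(2)[of x] e(1) by (simp add: x_def)
    then have Gx: "a < G x" by simp
    have "y \<in> S" if y: "x \<le> y" "y \<le> 0" for y
    proof (cases "y \<le> a")
      case True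
      have "G x \<le> G y" "G y \<le> G a" using G_le y True by auto
      then have "G y \<in> Cc" using above[of "G y"] Gx Ga1 by auto
      then show ?thesis using Cc_S S_G by auto
    next
      case False
      then show ?thesis using above[of y] y Cc_S by auto
    qed
    then have "{x..0} \<subseteq> Cc" using xa a_neg by (intro Cc_max) auto
    then have "x \<in> Cc" using xa a_neg by auto
    then show False using a_le[of x] xa by simp
  qed
  have Ga: "G a = a"
  proof -
    have "a/2 \<in> Cc" using above a_neg by auto
    then have "G (a/2) \<le> 0" using Cc_G nonpos by auto
    moreover have "G a < G (a/2)" using G_less a_neg by simp
    ultimately have Ga0: "G a < 0" by simp
    have ge: "a \<le> G a"
    proof (rule ccontr)
      assume "\<not> a \<le> G a"
      then have lt: "G a < a" by simp
      obtain e where e: "e > 0" "\<And>y. y \<noteq> a \<Longrightarrow> norm (y - a) < e \<Longrightarrow> norm (G y - G a) < a - G a"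
        using LIM_D[OF G_cont[of a, unfolded isCont_def], of "a - G a"] lt by auto
      define y where "y = a + min (e/2) (-a/2)"
      have y: "a < y" "y \<le> 0" "norm (y - a) < e" using e a_neg by (auto simp: y_def)
      have "G y \<in> Cc" using above[OF y(1,2)] Cc_G by auto
      then have "a \<le> G y" using a_le by simp
      moreover have "norm (G y - G a) < a - G a" using e(2)[of y] y by auto
      ultimately show False by simp
    qed
    show ?thesis
    proof (rule ccontr)
      assume "G a \<noteq> a"
      then have "a < G a" using ge by simp
      then have "G a \<in> S" using above[of "G a"] Ga0 Cc_S by auto
      then have aS: "a \<in> S" using S_G by simp
      have "{a..0} \<subseteq> S"
      proof
        fix y assume "y \<in> {a..0}"
        then show "y \<in> S" using aS above[of y] Cc_S by (cases "y = a") auto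
      qed
      then have "{a..0} \<subseteq> Cc" using a_neg by (intro Cc_max) auto
      moreover have "a \<in> {a..0}" using a_neg by simp
      ultimately show False using a_notin by blast
    qed
  qed
  define A where "A = a + 1"
  have A: "0 < A" "A < 1" using a_gt a_neg by (auto simp: A_def)
  have Cc_char: "t \<in> Cc \<longleftrightarrow> a < t \<and> t \<le> 0" for t
    using a_le a_notin nonpos above by (auto simp: less_le)
  have W0_char: "x \<in> W0 F \<longleftrightarrow> x = 0 \<or> A < x" if x: "x \<in> {0..<1}" for x
  proof
    assume "x \<in> W0 F"
    then obtain t where t: "t \<in> Cc" "x = frac t" by (auto simp: W0_eq)
    then have tr: "a < t" "t \<le> 0" using Cc_char by auto
    show "x = 0 \<or> A < x"
    proof (cases "t = 0")
      case True then show ?thesis using t by simp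
    next
      case False
      then have "t < 0" using tr by simp
      then have "frac t = t + 1" using tr a_gt by (subst frac_unique_iff) (auto intro: Ints_1 Ints_minus)
      then show ?thesis using t tr by (simp add: A_def)
    qed
  next
    assume "x = 0 \<or> A < x"
    then show "x \<in> W0 F"
    proof
      assume "x = 0" then show ?thesis using Cc_0 by (force simp: W0_eq)
    next
      assume Ax: "A < x"
      have "x - 1 \<in> Cc" using Ax x Cc_char by (auto simp: A_def)
      moreover have "frac (x - 1) = x" using x by (subst frac_unique_iff) auto
      ultimately show ?thesis by (force simp: W0_eq)
    qed
  qed
  have expA: "G' x > 1" if "0 < x" "x \<le> A" for x
  proof -
    have "x \<in> {0..<1} - W0 F" using W0_char[of x] that A by auto
    then have "\<bar>G' x\<bar> > 1" using expanding by blast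
    then show ?thesis using G'_pos[of x] by simp
  qed
  have GA: "G A = A + of_int d - 1" using G_per[of a] Ga by (simp add: A_def)
  have d2: "d \<ge> 2"
  proof -
    have "G 1 = of_int d" using G_per[of 0] G0 by simp
    moreover have "G 0 < G 1" using G_less by simp
    ultimately have d1: "d \<ge> 1" using G0 by simp
    have "\<exists>z>0. z < A \<and> G A - G 0 = (A - 0) * G' z"
      by (rule MVT2) (use A G_deriv in auto)
    then obtain z where z: "0 < z" "z < A" "G A - G 0 = (A - 0) * G' z" by blast
    have "G' z > 1" using expA z by auto
    then have "A < A * G' z" using A by simp
    then have "G A > A" using z G0 by simp
    then have "d \<noteq> 1" using GA by auto
    then show ?thesis using d1 by simp
  qed
  interpret sc: sn_core G G' G'' d A
  proof
    show "\<And>x. (G has_real_derivative G' x) (at x)" by (rule G_deriv)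
    show "\<And>x. (G' has_real_derivative G'' x) (at x)" by (rule F'_deriv)
    show "continuous_on UNIV G''" by (rule F''_cont)
    show "\<And>x. 0 < G' x" by (rule G'_pos)
    show "\<And>x. G (x + 1) = G x + of_int d" by (rule G_per)
    show "G 0 = 0" by (rule G0)
    show "0 < A" "A < 1" by (rule A(1), rule A(2))
    show "G A = A + of_int d - 1" by (rule GA)
    show "\<And>x. 0 < x \<Longrightarrow> x \<le> A \<Longrightarrow> 1 < G' x" by (rule expA)
    show "2 \<le> d" by (rule d2)
  qed
  have cmf: "cm = sc.f" using cm_fun by (simp add: sc.f_def[abs_def])
  have "Lp \<subseteq> sc.Lam"
  proof
    fix x assume x: "x \<in> Lp"
    have "(cm ^^ n) x \<in> {0<..A}" for n
    proof -
      have nW: "(cm ^^ n) x \<notin> W0 F" using x by (auto simp: Lp_def)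
      have r: "(cm ^^ n) x \<in> {0..<1}"
      proof (cases n)
        case 0 then show ?thesis using x by (simp add: Lp_def)
      next
        case (Suc m) then show ?thesis using frac_lt_1 by (simp add: cm_eq)
      qed
      then show ?thesis using W0_char[OF r] nW by auto
    qed
    then show "x \<in> sc.Lam" by (simp add: sc.Lam_def cmf)
  qed
  moreover have "negligible sc.Lam" using sc.Lam_null by (simp add: negligible_iff_null_sets)
  ultimately have "negligible Lp" using negligible_subset by blast
  then show ?thesis by (simp add: negligible_iff_null_sets)
qed

lemma Lp_null: "Lp \<in> null_sets lebesgue"
proof (cases "\<exists>u. {u<..<u+1} \<subseteq> Cc")
  case True
  then obtain u where "{u<..<u+1} \<subseteq> Cc" by blast
  then have "Lp \<subseteq> {frac u}" by (rule trivial_case)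
  moreover have "negligible {frac u}" by simp
  ultimately have "negligible Lp" using negligible_subset by blast
  then show ?thesis by (simp add: negligible_iff_null_sets)
next
  case False
  then show ?thesis by (rule nontrivial_case)
qed

lemma W0_basin: "W0 F \<subseteq> basin0 F"
  using Cc_S by (auto simp: W0_eq S_def)

lemma notLp_basin: assumes "x \<in> {0..<1}" "x \<notin> Lp" shows "x \<in> basin0 F"
proof -
  obtain n where n: "(cm ^^ n) x \<in> W0 F" using assms by (auto simp: Lp_def)
  then have "(cm ^^ n) x \<in> basin0 F" using W0_basin by auto
  then have "(\<lambda>k. cdist0 ((cm ^^ k) ((cm ^^ n) x))) \<longlonglongrightarrow> 0" by (simp add: basin0_def)
  then have "(\<lambda>k. cdist0 ((cm ^^ (k + n)) x)) \<longlonglongrightarrow> 0" by (simp add: funpow_add)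
  then have "(\<lambda>k. cdist0 ((cm ^^ k) x)) \<longlonglongrightarrow> 0" by (rule LIMSEQ_offset)
  then show ?thesis using assms(1) by (simp add: basin0_def)
qed

end

lemma space_M_borel[simp]: "space M_borel = {0..<1}" by (simp add: M_borel_def space_restrict_space)

lemma cont_meas_M_borel: "continuous_on UNIV \<phi> \<Longrightarrow> (\<phi>::real\<Rightarrow>real) \<in> borel_measurable M_borel"
  unfolding M_borel_def by (intro measurable_restrict_space1 borel_measurable_continuous_onI)

theorem theoremA:
  fixes F :: "real \<Rightarrow> real"
  assumes lift: "\<exists>d::int. \<forall>x. F (x + 1) = F x + of_int d"
    and C2: "\<forall>x. F differentiable (at x)" "\<forall>x. deriv F differentiable (at x)"
      "continuous_on UNIV (deriv (deriv F))"
    and local_diffeo: "\<forall>x. deriv F x \<noteq> 0"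
    and fixed: "F 0 \<in> \<int>"
    and saddle_node: "deriv F 0 = 1" "deriv (deriv F) 0 > 0"
    and unique_sn: "\<forall>p\<in>{0..<1}. circ_map F p = p \<and> deriv F p = 1 \<and> deriv (deriv F) p > 0 \<longrightarrow> p = 0"
    and expanding: "\<forall>x\<in>{0..<1} - W0 F. \<bar>deriv F x\<bar> > 1"
  shows "is_physical F (return M_borel 0) \<and>
         (\<forall>\<mu>. is_physical F \<mu> \<longrightarrow> \<mu> = return M_borel 0)"
proof -
  obtain d :: int where per: "\<And>x. F (x + 1) = F x + of_int d" using lift by blast
  obtain k0 :: int where k0: "F 0 = of_int k0" using fixed by (auto elim: Ints_cases)
  have Fd: "(F has_real_derivative deriv F x) (at x)" for x
    using C2(1) DERIV_deriv_iff_real_differentiable by blast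
  have F'd: "(deriv F has_real_derivative deriv (deriv F) x) (at x)" for x
    using C2(2) DERIV_deriv_iff_real_differentiable by blast
  interpret T: thmA F d k0
  proof
    show "\<And>x. (F has_real_derivative deriv F x) (at x)" by (rule Fd)
    show "\<And>x. (deriv F has_real_derivative deriv (deriv F) x) (at x)" by (rule F'd)
    show "continuous_on UNIV (deriv (deriv F))" by (rule C2(3))
    show "\<And>x. F (x + 1) = F x + of_int d" by (rule per)
    show "F 0 = of_int k0" by (rule k0)
    show "deriv F 0 = 1" "0 < deriv (deriv F) 0" by (rule saddle_node(1), rule saddle_node(2))
    show "\<And>x. deriv F x \<noteq> 0" using local_diffeo by blast
    show "\<forall>x\<in>{0..<1} - W0 F. 1 < \<bar>deriv F x\<bar>" by (rule expanding)
  qed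
  define \<delta> where "\<delta> = return M_borel (0::real)"
  have sp: "0 \<in> space M_borel" by simp
  have cm0: "circ_map F 0 = 0" by (simp add: circ_map_def k0)
  have cm_range: "circ_map F x \<in> {0..<1}" for x using frac_lt_1 by (simp add: circ_map_def)
  have iter_range: "(circ_map F ^^ j) x \<in> {0..<1}" if "x \<in> {0..<1}" for x j
    using that cm_range by (cases j) auto
  have EB0: "x \<in> ergodic_basin F \<delta>" if x: "x \<in> {0..<1}" "x \<notin> T.Lp" for x
  proof -
    have xb: "x \<in> basin0 F" by (rule T.notLp_basin[OF x])
    have "(\<lambda>n. (\<Sum>j<n. \<phi> ((circ_map F ^^ j) x)) / real n) \<longlonglongrightarrow> integral\<^sup>L \<delta> \<phi>"
      if \<phi>: "continuous_on UNIV \<phi>" "\<forall>y. \<phi> (y + 1) = \<phi> y" for \<phi> :: "real \<Rightarrow> real"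
    proof -
      have int: "integral\<^sup>L \<delta> \<phi> = \<phi> 0"
        unfolding \<delta>_def by (rule integral_return[OF sp cont_meas_M_borel[OF \<phi>(1)]])
      have "(\<lambda>j. \<phi> ((circ_map F ^^ j) x)) \<longlonglongrightarrow> \<phi> 0"
        by (rule periodic_conv[OF \<phi>]) (use iter_range[OF x(1)] xb in \<open>auto simp: basin0_def\<close>)
      then show ?thesis unfolding int by (rule cesaro)
    qed
    then show ?thesis using x by (simp add: ergodic_basin_def)
  qed
  have EBsub: "ergodic_basin F \<mu> \<subseteq> {0..<1}" for \<mu> by (auto simp: ergodic_basin_def)
  have Lpn: "T.Lp \<in> null_sets lebesgue" by (rule T.Lp_null)
  have phys: "is_physical F \<delta>"
  proof -
    have P: "prob_space \<delta>" unfolding \<delta>_def by (rule prob_space_return[OF sp])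
    have S: "sets \<delta> = sets M_borel" by (simp add: \<delta>_def)
    have cmb: "circ_map F \<in> M_borel \<rightarrow>\<^sub>M M_borel"
    proof -
      have Fc: "continuous_on UNIV F"
        using Fd by (meson DERIV_isCont continuous_at_imp_continuous_on)
      have "F \<in> borel_measurable borel" by (rule borel_measurable_continuous_onI[OF Fc])
      then have "(\<lambda>x. frac (F x)) \<in> borel_measurable borel" unfolding frac_def by measurable
      then have "circ_map F \<in> borel_measurable borel" by (simp add: circ_map_def[abs_def])
      then have "circ_map F \<in> M_borel \<rightarrow>\<^sub>M borel" unfolding M_borel_def by (rule measurable_restrict_space1)
      moreover have "circ_map F \<in> space M_borel \<rightarrow> {0..<1}" using cm_range by auto
      ultimately show ?thesis unfolding M_borel_def measurable_restrict_space2_iff by simp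
    qed
    have "measurable \<delta> \<delta> = measurable M_borel M_borel"
      unfolding \<delta>_def by (rule measurable_cong_sets) simp_all
    then have M: "circ_map F \<in> \<delta> \<rightarrow>\<^sub>M \<delta>" using cmb by simp
    have I: "\<forall>A\<in>sets \<delta>. emeasure \<delta> (circ_map F -` A \<inter> space \<delta>) = emeasure \<delta> A"
    proof
      fix A assume A: "A \<in> sets \<delta>"
      have "circ_map F -` A \<inter> space \<delta> \<in> sets \<delta>" using measurable_sets[OF M A] .
      then have "emeasure \<delta> (circ_map F -` A \<inter> space \<delta>) = indicator (circ_map F -` A \<inter> space \<delta>) 0"
        by (simp add: \<delta>_def)
      also have "\<dots> = indicator A 0" using cm0 by (simp add: \<delta>_def indicator_def)
      also have "\<dots> = emeasure \<delta> A" using A by (simp add: \<delta>_def)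
      finally show "emeasure \<delta> (circ_map F -` A \<inter> space \<delta>) = emeasure \<delta> A" .
    qed
    define E where "E = ergodic_basin F \<delta>"
    have D: "{0..<1} - T.Lp \<subseteq> E" using EB0 by (auto simp: E_def)
    have E01: "E \<subseteq> {0..<1}" using EBsub by (simp add: E_def)
    have m1: "{0..<1} - T.Lp \<in> sets lebesgue" using Lpn by auto
    have n2: "E \<inter> T.Lp \<in> null_sets lebesgue"
      by (rule null_sets_completion_subset[OF _ Lpn]) auto
    have Eeq: "E = ({0..<1} - T.Lp) \<union> (E \<inter> T.Lp)" using D E01 by auto
    have Em: "E \<in> sets lebesgue" using m1 n2 by (subst Eeq) auto
    have "emeasure lebesgue ({0..<1} - T.Lp) = emeasure lebesgue {0..<1::real}"
      by (rule emeasure_Diff_null_set[OF Lpn]) simp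
    also have "\<dots> = 1" by simp
    finally have "1 \<le> emeasure lebesgue E" using emeasure_mono[OF D Em] by simp
    then have pos: "emeasure lebesgue E > 0" by (rule less_le_trans[OF zero_less_one])
    show ?thesis unfolding is_physical_def using P S M I pos unfolding E_def by blast
  qed
  have uniq: "\<mu> = \<delta>" if ph: "is_physical F \<mu>" for \<mu>
  proof -
    have P: "prob_space \<mu>" and S: "sets \<mu> = sets M_borel" and pos: "emeasure lebesgue (ergodic_basin F \<mu>) > 0"
      using ph by (auto simp: is_physical_def)
    interpret prob_space \<mu> by (rule P)
    have spm: "space \<mu> = {0..<1}" using sets_eq_imp_space_eq[OF S] by simp
    define E where "E = ergodic_basin F \<mu>"
    have "\<exists>x\<in>E. x \<notin> T.Lp"
    proof (rule ccontr)
      assume "\<not> (\<exists>x\<in>E. x \<notin> T.Lp)"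
      then have "E \<subseteq> T.Lp" by blast
      then have "E \<in> null_sets lebesgue" using null_sets_completion_subset[OF _ Lpn] by blast
      then show False using pos by (simp add: E_def null_sets_def)
    qed
    then obtain x where xE: "x \<in> E" and xL: "x \<notin> T.Lp" by blast
    have x01: "x \<in> {0..<1}" using xE EBsub[of \<mu>] unfolding E_def by blast
    have xD: "x \<in> ergodic_basin F \<delta>" by (rule EB0[OF x01 xL])
    define \<phi>0 where "\<phi>0 y = 1 - cos (2 * pi * y)" for y :: real
    have c0: "continuous_on UNIV \<phi>0" unfolding \<phi>0_def by (intro continuous_intros)
    have p0: "\<forall>y. \<phi>0 (y + 1) = \<phi>0 y"
    proof
      fix y have "2 * pi * (y + 1) = 2 * pi * y + 2 * pi" by (simp add: algebra_simps)
      then show "\<phi>0 (y + 1) = \<phi>0 y" by (simp add: \<phi>0_def)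
    qed
    have l1: "(\<lambda>n. (\<Sum>j<n. \<phi>0 ((circ_map F ^^ j) x)) / real n) \<longlonglongrightarrow> integral\<^sup>L \<mu> \<phi>0"
      using xE c0 p0 by (simp add: E_def ergodic_basin_def)
    have l2: "(\<lambda>n. (\<Sum>j<n. \<phi>0 ((circ_map F ^^ j) x)) / real n) \<longlonglongrightarrow> integral\<^sup>L \<delta> \<phi>0"
      using xD c0 p0 by (simp add: ergodic_basin_def)
    have "integral\<^sup>L \<delta> \<phi>0 = \<phi>0 0"
      unfolding \<delta>_def by (rule integral_return[OF sp cont_meas_M_borel[OF c0]])
    then have int0: "integral\<^sup>L \<mu> \<phi>0 = 0" using LIMSEQ_unique[OF l1 l2] by (simp add: \<phi>0_def)
    have meas: "\<phi>0 \<in> borel_measurable \<mu>"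
      using cont_meas_M_borel[OF c0] by (simp add: measurable_cong_sets[OF S refl])
    have nn: "0 \<le> \<phi>0 y" for y by (simp add: \<phi>0_def)
    have integ: "integrable \<mu> \<phi>0"
    proof (rule integrable_const_bound[where B=2])
      show "AE x in \<mu>. norm (\<phi>0 x) \<le> 2"
      proof (rule AE_I2)
        fix y have "cos (2 * pi * y) \<ge> -1" by simp
        then show "norm (\<phi>0 y) \<le> 2" using nn[of y] by (simp add: \<phi>0_def)
      qed
    qed (rule meas)
    have "AE y in \<mu>. \<phi>0 y = 0"
      using integral_nonneg_eq_0_iff_AE[OF integ] nn int0 by simp
    then have AE0: "AE y in \<mu>. y = 0"
    proof (rule AE_mp[OF AE_conjI[OF _ AE_space]], intro AE_I2 impI)
      fix y assume y: "\<phi>0 y = 0 \<and> y \<in> space \<mu>"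
      then have "cos (2 * pi * y) = 1" by (simp add: \<phi>0_def)
      then obtain n :: int where "2 * pi * y = of_int n * 2 * pi" by (auto simp: cos_one_2pi_int)
      then have "y = of_int n" by simp
      moreover have "0 \<le> y" "y < 1" using y spm by auto
      ultimately show "y = 0" by simp
    qed
    show ?thesis
    proof (rule measure_eqI)
      show "sets \<mu> = sets \<delta>" using S by (simp add: \<delta>_def)
      fix A assume A: "A \<in> sets \<mu>"
      have Ad: "emeasure \<delta> A = indicator A 0" using A S by (simp add: \<delta>_def)
      show "emeasure \<mu> A = emeasure \<delta> A"
      proof (cases "0 \<in> A")
        case True
        have "AE y in \<mu>. (y \<in> A) = (y \<in> space \<mu>)"
          using AE0 by (rule AE_mp) (use True spm in auto)
        then have "emeasure \<mu> A = emeasure \<mu> (space \<mu>)" by (rule emeasure_eq_AE) (use A in auto)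
        then show ?thesis using Ad True emeasure_space_1 by simp
      next
        case False
        have "AE y in \<mu>. (y \<in> A) = (y \<in> {})"
          using AE0 by (rule AE_mp) (use False in auto)
        then have "emeasure \<mu> A = emeasure \<mu> {}" by (rule emeasure_eq_AE) (use A in auto)
        then show ?thesis using Ad False by simp
      qed
    qed
  qed
  show ?thesis unfolding \<delta>_def[symmetric] using phys uniq by blast
qed

end
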